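(* The mapping $\psi:\mathcal{C}^3_{\rm c}\to\mathcal{C}^3_{\rm c}$ is discontinuous (with respect to $d_\infty$) at every point of a dense subset of $(\mathcal{C}^3_{\rm c},d_\infty)$.
   Context: $\mathbb{I}=[0,1]$, $\lambda$ Lebesgue measure; $d_\infty(C_1,C_2)=\max_{\mathbf{x}\in\mathbb{I}^3}|C_1(\mathbf{x})-C_2(\mathbf{x})|$. Points of $\mathbb{I}^3$ are written $(\mathbf{u},v)$, $\mathbf{u}=(u_1,u_2)$. For a three-dimensional copula $C$, $K_C$ is (a version of) the regular conditional distribution of $(U_1,U_2)$ given $U_3=v$, $(U_1,U_2,U_3)\sim C$; $F_{1|3}(u_1|t)=K_C(t,[0,u_1]\times\mathbb{I})$, $F_{2|3}(u_2|t)=K_C(t,\mathbb{I}\times[0,u_2])$. $\mathcal{C}^3_{\rm c}$ is the set of three-dimensional copulas for which $F_{1|3}(\cdot|t)$, $F_{2|3}(\cdot|t)$ are continuous for $\lambda$-a.e. $t$; for such $C$, for a.e. $t$ the conditional copula $C^t_{12;3}$ is the unique bivariate copula with $K_C(t,[\mathbf{0},\mathbf{u}])=C^t_{12;3}(F_{1|3}(u_1|t),F_{2|3}(u_2|t))$. The partial copula is $C_p(\mathbf{s})=\int_{\mathbb{I}}C^t_{12;3}(\mathbf{s})\,d\lambda(t)$ and $\psi(C)(\mathbf{u},v)=\int_{[0,v]}C_p(F_{1|3}(u_1|t),F_{2|3}(u_2|t))\,d\lambda(t)$. *)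

theory Defs
  imports "HOL-Probability.Probability"
begin

text \<open>Copulas are represented as real-valued functions; only their values on the unit
cube matter. Points of the cube are written (u1, u2, v).\<close>

definition unitI :: "real set" where "unitI = {0..1}"

definition copula2 :: "(real \<Rightarrow> real \<Rightarrow> real) \<Rightarrow> bool" where
  "copula2 D \<longleftrightarrow>
     (\<forall>s\<in>unitI. D 0 s = 0 \<and> D s 0 = 0 \<and> D s 1 = s \<and> D 1 s = s) \<and>
     (\<forall>a1\<in>unitI. \<forall>b1\<in>unitI. \<forall>a2\<in>unitI. \<forall>b2\<in>unitI. a1 \<le> b1 \<longrightarrow> a2 \<le> b2 \<longrightarrow>
        D b1 b2 - D a1 b2 - D b1 a2 + D a1 a2 \<ge> 0)"

definition copula3 :: "(real \<Rightarrow> real \<Rightarrow> real \<Rightarrow> real) \<Rightarrow> bool" where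
  "copula3 C \<longleftrightarrow>
     (\<forall>x\<in>unitI. \<forall>y\<in>unitI. C 0 x y = 0 \<and> C x 0 y = 0 \<and> C x y 0 = 0) \<and>
     (\<forall>s\<in>unitI. C s 1 1 = s \<and> C 1 s 1 = s \<and> C 1 1 s = s) \<and>
     (\<forall>a1\<in>unitI. \<forall>b1\<in>unitI. \<forall>a2\<in>unitI. \<forall>b2\<in>unitI. \<forall>a3\<in>unitI. \<forall>b3\<in>unitI.
        a1 \<le> b1 \<longrightarrow> a2 \<le> b2 \<longrightarrow> a3 \<le> b3 \<longrightarrow>
        C b1 b2 b3 - C a1 b2 b3 - C b1 a2 b3 - C b1 b2 a3
          + C a1 a2 b3 + C a1 b2 a3 + C b1 a2 a3 - C a1 a2 a3 \<ge> 0)"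

definition dinf :: "(real \<Rightarrow> real \<Rightarrow> real \<Rightarrow> real) \<Rightarrow> (real \<Rightarrow> real \<Rightarrow> real \<Rightarrow> real) \<Rightarrow> real" where
  "dinf C1 C2 = (SUP x \<in> unitI \<times> unitI \<times> unitI.
      \<bar>C1 (fst x) (fst (snd x)) (snd (snd x)) - C2 (fst x) (fst (snd x)) (snd (snd x))\<bar>)"

definition markov_kernel :: "(real \<Rightarrow> (real \<times> real) measure) \<Rightarrow> bool" where
  "markov_kernel K \<longleftrightarrow>
     (\<forall>t. prob_space (K t) \<and> sets (K t) = sets (borel :: (real \<times> real) measure)) \<and>
     (\<forall>E \<in> sets (borel :: (real \<times> real) measure). (\<lambda>t. measure (K t) E) \<in> borel_measurable lborel)"

text \<open>K is a version of the regular conditional distribution of (U1,U2) given U3 = t,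
  where (U1,U2,U3) ~ C.  (The rectangle identity determines K up to a null set of t.)\<close>
definition is_rcd :: "(real \<Rightarrow> real \<Rightarrow> real \<Rightarrow> real) \<Rightarrow> (real \<Rightarrow> (real \<times> real) measure) \<Rightarrow> bool" where
  "is_rcd C K \<longleftrightarrow> markov_kernel K \<and>
     (\<forall>u1\<in>unitI. \<forall>u2\<in>unitI. \<forall>v\<in>unitI.
        C u1 u2 v = (LINT t:{0..v}|lborel. measure (K t) ({0..u1} \<times> {0..u2})))"

definition KC :: "(real \<Rightarrow> real \<Rightarrow> real \<Rightarrow> real) \<Rightarrow> real \<Rightarrow> (real \<times> real) measure" where
  "KC C = (SOME K. is_rcd C K)"

definition F13 :: "(real \<Rightarrow> real \<Rightarrow> real \<Rightarrow> real) \<Rightarrow> real \<Rightarrow> real \<Rightarrow> real" where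
  "F13 C u1 t = measure (KC C t) ({0..u1} \<times> {0..1})"

definition F23 :: "(real \<Rightarrow> real \<Rightarrow> real \<Rightarrow> real) \<Rightarrow> real \<Rightarrow> real \<Rightarrow> real" where
  "F23 C u2 t = measure (KC C t) ({0..1} \<times> {0..u2})"

definition Cc :: "(real \<Rightarrow> real \<Rightarrow> real \<Rightarrow> real) set" where
  "Cc = {C. copula3 C \<and> (\<exists>K. is_rcd C K \<and>
      (AE t in lborel. t \<in> unitI \<longrightarrow>
         continuous_on UNIV (\<lambda>u. measure (K t) ({0..u} \<times> {0..1})) \<and>
         continuous_on UNIV (\<lambda>u. measure (K t) ({0..1} \<times> {0..u}))))}"

text \<open>Conditional copula C^t_{12;3} (unique for a.e. t when C is in C^3_c).\<close>
definition condcop :: "(real \<Rightarrow> real \<Rightarrow> real \<Rightarrow> real) \<Rightarrow> real \<Rightarrow> real \<Rightarrow> real \<Rightarrow> real" where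
  "condcop C t = (SOME D. copula2 D \<and>
      (\<forall>u1\<in>unitI. \<forall>u2\<in>unitI.
         measure (KC C t) ({0..u1} \<times> {0..u2}) = D (F13 C u1 t) (F23 C u2 t)))"

definition partial_copula :: "(real \<Rightarrow> real \<Rightarrow> real \<Rightarrow> real) \<Rightarrow> real \<Rightarrow> real \<Rightarrow> real" where
  "partial_copula C s1 s2 = (LINT t:unitI|lebesgue. condcop C t s1 s2)"

definition psi :: "(real \<Rightarrow> real \<Rightarrow> real \<Rightarrow> real) \<Rightarrow> real \<Rightarrow> real \<Rightarrow> real \<Rightarrow> real" where
  "psi C u1 u2 v = (LINT t:{0..v}|lebesgue. partial_copula C (F13 C u1 t) (F23 C u2 t))"

end

theory Submission
  imports Defs
begin


definition clamp01 :: "real \<Rightarrow> real" where "clamp01 z = max 0 (min 1 z)"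

datatype seg = Seg (sx: real) (sh: real) (sy: real) (sk: real) (styp: bool)

definition Umeas :: "real measure" where "Umeas = uniform_measure lborel {0..1}"

definition smap :: "seg \<Rightarrow> real \<Rightarrow> real \<times> real" where
  "smap s x = (sx s + sh s * x, if styp s then sy s + sk s * x else sy s + sk s - sk s * x)"

definition segmeas :: "seg \<Rightarrow> (real \<times> real) measure" where
  "segmeas s = distr Umeas borel (smap s)"

definition F1s :: "seg \<Rightarrow> real \<Rightarrow> real" where "F1s s u = clamp01 ((u - sx s) / sh s)"
definition F2s :: "seg \<Rightarrow> real \<Rightarrow> real" where "F2s s u = clamp01 ((u - sy s) / sk s)"
definition cop :: "bool \<Rightarrow> real \<Rightarrow> real \<Rightarrow> real" where
  "cop b s1 s2 = (if b then min s1 s2 else max 0 (s1 + s2 - 1))"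
definition Rs :: "seg \<Rightarrow> real \<Rightarrow> real \<Rightarrow> real" where
  "Rs s u1 u2 = cop (styp s) (F1s s u1) (F2s s u2)"
definition valid_seg :: "seg \<Rightarrow> bool" where
  "valid_seg s \<longleftrightarrow> 0 \<le> sx s \<and> 0 < sh s \<and> sx s + sh s \<le> 1 \<and> 0 \<le> sy s \<and> 0 < sk s \<and> sy s + sk s \<le> 1"

lemma prob_Umeas: "prob_space Umeas"
  unfolding Umeas_def by (rule prob_space_uniform_measure) auto

lemma sets_Umeas[simp]: "sets Umeas = sets borel"
  unfolding Umeas_def by simp

lemma space_Umeas[simp]: "space Umeas = UNIV"
  unfolding Umeas_def by simp

lemma measure_Umeas: "B \<in> sets borel \<Longrightarrow> measure Umeas B = measure lborel ({0..1} \<inter> B)"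
  unfolding Umeas_def by (subst measure_uniform_measure) auto

lemma smap_cont: "continuous_on UNIV (smap s)"
  unfolding smap_def by (cases "styp s") (auto intro!: continuous_intros)
lemma smap_meas[measurable]: "smap s \<in> borel_measurable borel"
  by (rule borel_measurable_continuous_onI[OF smap_cont])

lemma sets_segmeas[simp]: "sets (segmeas s) = sets borel"
  unfolding segmeas_def by simp

lemma prob_segmeas: "prob_space (segmeas s)"
  unfolding segmeas_def
proof (rule prob_space.prob_space_distr[OF prob_Umeas])
  show "smap s \<in> Umeas \<rightarrow>\<^sub>M borel" using smap_meas measurable_cong_sets[OF sets_Umeas refl] by blast
qed

lemma measure_segmeas:
  assumes A: "A \<in> sets borel"
  shows "measure (segmeas s) A = measure lborel ({0..1} \<inter> smap s -` A)"
proof -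
  have m: "smap s \<in> Umeas \<rightarrow>\<^sub>M borel" using smap_meas measurable_cong_sets[OF sets_Umeas refl] by blast
  have "measure (distr Umeas borel (smap s)) A = measure Umeas (smap s -` A \<inter> space Umeas)"
    by (rule measure_distr[OF m]) (use A in simp)
  also have "\<dots> = measure lborel ({0..1} \<inter> smap s -` A)"
    using measurable_sets[OF smap_meas A] by (subst measure_Umeas) auto
  finally show ?thesis unfolding segmeas_def .
qed

lemma Rs_M_aux:
  fixes a h b k u1 u2 :: real
  assumes "0 \<le> a" "0 < h" "0 \<le> b" "0 < k"
  shows "{0..1} \<inter> {x. a + h * x \<in> {0..u1} \<and> b + k * x \<in> {0..u2}} = {0 .. min 1 (min ((u1 - a)/h) ((u2 - b)/k))}"
proof -
  have "a + h * x \<le> u1 \<longleftrightarrow> x \<le> (u1 - a)/h" for x using assms by (simp add: field_simps)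
  moreover have "b + k * x \<le> u2 \<longleftrightarrow> x \<le> (u2 - b)/k" for x using assms by (simp add: field_simps)
  moreover have "0 \<le> x \<Longrightarrow> 0 \<le> a + h * x" for x using assms by simp
  moreover have "0 \<le> x \<Longrightarrow> 0 \<le> b + k * x" for x using assms by simp
  ultimately show ?thesis by auto
qed

lemma Rs_W_aux:
  fixes a h b k u1 u2 :: real
  assumes "0 \<le> a" "0 < h" "0 \<le> b" "0 < k"
  shows "{0..1} \<inter> {x. a + h * x \<in> {0..u1} \<and> b + k - k * x \<in> {0..u2}} = {max 0 (1 - (u2 - b)/k) .. min 1 ((u1 - a)/h)}"
proof -
  have "a + h * x \<le> u1 \<longleftrightarrow> x \<le> (u1 - a)/h" for x using assms by (simp add: field_simps)
  moreover have "b + k - k * x \<le> u2 \<longleftrightarrow> 1 - (u2 - b)/k \<le> x" for x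
    using assms by (simp add: field_simps)
  moreover have "x \<le> 1 \<Longrightarrow> 0 \<le> b + k - k * x" for x
    using assms by (smt (verit) mult_left_le)
  moreover have "0 \<le> x \<Longrightarrow> 0 \<le> a + h * x" for x using assms by simp
  ultimately show ?thesis by auto
qed

lemma arithM: "max 0 (min 1 (min A B)) = min (clamp01 A) (clamp01 (B::real))"
  unfolding clamp01_def by (simp add: max_def min_def)

lemma arithW: "max 0 (min 1 A - max 0 (1 - B)) = max 0 (clamp01 A + clamp01 (B::real) - 1)"
  unfolding clamp01_def by (simp add: max_def min_def)

lemma measure_Icc_max: "measure lborel {a..b::real} = max 0 (b - a)"
  by simp

lemma measure_rect_segmeas:
  assumes v: "valid_seg s"
  shows "measure (segmeas s) ({0..u1} \<times> {0..u2}) = Rs s u1 u2"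
proof -
  have pre: "{0..1} \<inter> smap s -` ({0..u1} \<times> {0..u2}) =
    {0..1} \<inter> {x. fst (smap s x) \<in> {0..u1} \<and> snd (smap s x) \<in> {0..u2}}" by (force simp: mem_Times_iff)
  have rb: "{0..u1} \<times> {0..u2} \<in> sets (borel :: (real \<times> real) measure)"
    by (intro borel_closed closed_Times) auto
  show ?thesis
  proof (cases "styp s")
    case True
    have "{0..1} \<inter> smap s -` ({0..u1} \<times> {0..u2}) = {0 .. min 1 (min ((u1 - sx s)/sh s) ((u2 - sy s)/sk s))}"
      unfolding pre using v True Rs_M_aux[of "sx s" "sh s" "sy s" "sk s" u1 u2]
      by (simp add: smap_def valid_seg_def)
    then have "measure (segmeas s) ({0..u1} \<times> {0..u2}) = max 0 (min 1 (min ((u1 - sx s)/sh s) ((u2 - sy s)/sk s)) - 0)"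
      using measure_segmeas[OF rb, of s] measure_Icc_max by (simp only:)
    then show ?thesis using True arithM by (simp add: Rs_def cop_def F1s_def F2s_def)
  next
    case False
    have "{0..1} \<inter> smap s -` ({0..u1} \<times> {0..u2}) = {max 0 (1 - (u2 - sy s)/sk s) .. min 1 ((u1 - sx s)/sh s)}"
      unfolding pre using v False Rs_W_aux[of "sx s" "sh s" "sy s" "sk s" u1 u2]
      by (simp add: smap_def valid_seg_def)
    then have "measure (segmeas s) ({0..u1} \<times> {0..u2}) = max 0 (min 1 ((u1 - sx s)/sh s) - max 0 (1 - (u2 - sy s)/sk s))"
      using measure_segmeas[OF rb, of s] measure_Icc_max by (simp only:)
    then show ?thesis using False by (simp add: Rs_def cop_def F1s_def F2s_def arithW)
  qed
qed


lemma fin_emeasure_Icc: "A \<subseteq> {a..b::real} \<Longrightarrow> emeasure lborel A < \<infinity>"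
proof -
  assume "A \<subseteq> {a..b}"
  then have "emeasure lborel A \<le> emeasure lborel {a..b}"
    by (intro emeasure_mono) auto
  also have "\<dots> < \<infinity>" by (simp add: emeasure_lborel_Icc_eq)
  finally show ?thesis .
qed

locale layout =
  fixes Q :: "'q set" and st len :: "'q \<Rightarrow> real" and sg :: "'q \<Rightarrow> seg"
  assumes finQ: "finite Q"
    and len_nn: "\<And>q. q \<in> Q \<Longrightarrow> 0 \<le> len q"
    and st_nn: "\<And>q. q \<in> Q \<Longrightarrow> 0 \<le> st q"
    and st_le: "\<And>q. q \<in> Q \<Longrightarrow> st q + len q \<le> 1"
    and disj: "\<And>q q'. q \<in> Q \<Longrightarrow> q' \<in> Q \<Longrightarrow> q \<noteq> q' \<Longrightarrow> {st q..<st q + len q} \<inter> {st q'..<st q' + len q'} = {}"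
    and sum_len: "(\<Sum>q\<in>Q. len q) = 1"
    and valid: "\<And>q. q \<in> Q \<Longrightarrow> valid_seg (sg q)"
begin

definition T :: "'q \<Rightarrow> real set" where "T q = {st q..<st q + len q}"
definition dflt :: seg where "dflt = Seg 0 1 0 1 True"
definition Rst :: "real set" where "Rst = - (\<Union>q\<in>Q. T q)"

definition kern :: "real \<Rightarrow> (real \<times> real) measure" where
  "kern t = (if \<exists>q\<in>Q. t \<in> T q then segmeas (sg (SOME q. q \<in> Q \<and> t \<in> T q)) else segmeas dflt)"

lemma valid_dflt: "valid_seg dflt" by (simp add: dflt_def valid_seg_def)

lemma T_sets[measurable]: "T q \<in> sets borel" by (simp add: T_def)

lemma Rst_sets[measurable]: "Rst \<in> sets borel"
  unfolding Rst_def using finQ by (intro borel_comp sets.finite_UN) auto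

lemma T_sub: "q \<in> Q \<Longrightarrow> T q \<subseteq> {0..1}"
  using st_nn st_le len_nn by (force simp: T_def)

lemma T_disj: "q \<in> Q \<Longrightarrow> q' \<in> Q \<Longrightarrow> q \<noteq> q' \<Longrightarrow> T q \<inter> T q' = {}"
  using disj by (simp add: T_def)

lemma kern_in: assumes "q \<in> Q" "t \<in> T q" shows "kern t = segmeas (sg q)"
proof -
  have "(SOME q. q \<in> Q \<and> t \<in> T q) = q"
    using assms T_disj by (intro some_equality) auto
  then show ?thesis using assms by (auto simp: kern_def)
qed

lemma kern_out: "t \<in> Rst \<Longrightarrow> kern t = segmeas dflt"
  by (auto simp: kern_def Rst_def)

lemma ind_sum_in:
  assumes "q0 \<in> Q" "t \<in> T q0"
  shows "(\<Sum>q\<in>Q. indicator (T q) t * (f q :: real)) = f q0"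
proof -
  have "(\<Sum>q\<in>Q. indicator (T q) t * f q) = indicator (T q0) t * f q0 + (\<Sum>q\<in>Q-{q0}. indicator (T q) t * f q)"
    by (rule sum.remove[OF finQ assms(1)])
  also have "(\<Sum>q\<in>Q-{q0}. indicator (T q) t * f q) = 0"
    using assms T_disj by (intro sum.neutral) (auto simp: indicator_def)
  finally show ?thesis using assms by simp
qed

lemma ind_sum_out:
  assumes "t \<in> Rst"
  shows "(\<Sum>q\<in>Q. indicator (T q) t * (f q :: real)) = 0"
  using assms by (intro sum.neutral) (auto simp: indicator_def Rst_def)

lemma kern_sum:
  "measure (kern t) A = (\<Sum>q\<in>Q. indicator (T q) t * measure (segmeas (sg q)) A) + indicator Rst t * measure (segmeas dflt) A"
proof (cases "t \<in> Rst")
  case True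
  then show ?thesis by (simp add: kern_out ind_sum_out)
next
  case False
  then obtain q0 where q0: "q0 \<in> Q" "t \<in> T q0" by (auto simp: Rst_def)
  then show ?thesis using False by (simp add: kern_in ind_sum_in[OF q0])
qed

lemma markov: "markov_kernel kern"
  unfolding markov_kernel_def
proof (intro conjI allI ballI)
  fix t
  show "prob_space (kern t)" by (simp add: kern_def prob_segmeas)
  show "sets (kern t) = sets borel" by (simp add: kern_def)
next
  fix E :: "(real \<times> real) set" assume "E \<in> sets borel"
  have "(\<lambda>t. (\<Sum>q\<in>Q. indicator (T q) t * measure (segmeas (sg q)) E) + indicator Rst t * measure (segmeas dflt) E) \<in> borel_measurable lborel"
    by measurable
  then show "(\<lambda>t. measure (kern t) E) \<in> borel_measurable lborel"
    by (subst kern_sum) simp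
qed

definition CL :: "real \<Rightarrow> real \<Rightarrow> real \<Rightarrow> real" where
  "CL u1 u2 v = (LINT t:{0..v}|lborel. measure (kern t) ({0..u1} \<times> {0..u2}))"

lemma rcd: "is_rcd CL kern"
  unfolding is_rcd_def using markov by (simp add: CL_def)

definition mu :: "'q \<Rightarrow> real \<Rightarrow> real" where "mu q v = measure lborel (T q \<inter> {0..v})"

lemma Rst_null: "Rst \<inter> {0..1} \<in> null_sets lborel"
proof -
  have U: "(\<Union>q\<in>Q. T q) \<subseteq> {0..1}" using T_sub by auto
  have mU: "measure lborel (\<Union>q\<in>Q. T q) = (\<Sum>q\<in>Q. measure lborel (T q))"
    using finQ T_disj fin_emeasure_Icc[OF T_sub]
    by (intro measure_finite_Union) (auto simp: disjoint_family_on_def less_top)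
  also have "\<dots> = (\<Sum>q\<in>Q. len q)"
    using len_nn by (intro sum.cong) (auto simp: T_def)
  finally have mU1: "measure lborel (\<Union>q\<in>Q. T q) = 1" using sum_len by simp
  have eq: "Rst \<inter> {0..1} = {0..1} - (\<Union>q\<in>Q. T q)" by (auto simp: Rst_def)
  have "measure lborel ({0..1} - (\<Union>q\<in>Q. T q)) = measure lborel {0..1::real} - measure lborel (\<Union>q\<in>Q. T q)"
    using U finQ by (intro measure_Diff) auto
  then have m0: "measure lborel (Rst \<inter> {0..1}) = 0" using mU1 eq by simp
  have "emeasure lborel (Rst \<inter> {0..1}) = 0"
    using m0 fin_emeasure_Icc[of "Rst \<inter> {0..1}" 0 1]
    by (subst emeasure_eq_ennreal_measure) auto
  then show ?thesis by auto
qed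

lemma CL_formula:
  assumes v: "v \<le> 1"
  shows "CL u1 u2 v = (\<Sum>q\<in>Q. Rs (sg q) u1 u2 * mu q v)"
proof -
  have k: "measure (kern t) ({0..u1} \<times> {0..u2}) = (\<Sum>q\<in>Q. indicator (T q) t * Rs (sg q) u1 u2) + indicator Rst t * Rs dflt u1 u2" for t
    using kern_sum valid valid_dflt measure_rect_segmeas by simp
  have fin: "emeasure lborel (A \<inter> {0..v}) < \<infinity>" for A
    by (rule fin_emeasure_Icc[of _ 0 v]) auto
  have "CL u1 u2 v = (LINT t|lborel. (\<Sum>q\<in>Q. Rs (sg q) u1 u2 * indicator (T q \<inter> {0..v}) t) + Rs dflt u1 u2 * indicator (Rst \<inter> {0..v}) t)"
    unfolding CL_def set_lebesgue_integral_def k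
    by (intro Bochner_Integration.integral_cong refl) (auto simp: indicator_def sum_distrib_left ac_simps)
  also have "\<dots> = (\<Sum>q\<in>Q. Rs (sg q) u1 u2 * mu q v) + Rs dflt u1 u2 * measure lborel (Rst \<inter> {0..v})"
    using fin by (simp add: mu_def)
  also have "measure lborel (Rst \<inter> {0..v}) = 0"
  proof -
    have "Rst \<inter> {0..v} \<subseteq> Rst \<inter> {0..1}" using v by auto
    then have "Rst \<inter> {0..v} \<in> null_sets lborel"
      by (intro null_sets_subset[OF Rst_null]) auto
    then show ?thesis by (simp add: measure_eq_0_null_sets)
  qed
  finally show ?thesis by simp
qed

end


lemma clamp01_range: "0 \<le> clamp01 z" "clamp01 z \<le> 1" by (auto simp: clamp01_def)
lemma clamp01_mono: "x \<le> y \<Longrightarrow> clamp01 x \<le> clamp01 y" by (auto simp: clamp01_def)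
lemma clamp01_id: "0 \<le> z \<Longrightarrow> z \<le> 1 \<Longrightarrow> clamp01 z = z" by (auto simp: clamp01_def)
lemma clamp01_cont: "continuous_on UNIV (\<lambda>u. clamp01 (f u))" if "continuous_on UNIV f"
  unfolding clamp01_def using that by (intro continuous_intros)

lemma cop_0l: "0 \<le> x \<Longrightarrow> x \<le> 1 \<Longrightarrow> cop b 0 x = 0" by (auto simp: cop_def)
lemma cop_0r: "0 \<le> x \<Longrightarrow> x \<le> 1 \<Longrightarrow> cop b x 0 = 0" by (auto simp: cop_def)
lemma cop_1l: "0 \<le> x \<Longrightarrow> x \<le> 1 \<Longrightarrow> cop b 1 x = x" by (auto simp: cop_def)
lemma cop_1r: "0 \<le> x \<Longrightarrow> x \<le> 1 \<Longrightarrow> cop b x 1 = x" by (auto simp: cop_def)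
lemma cop_range: "0 \<le> x \<Longrightarrow> x \<le> 1 \<Longrightarrow> 0 \<le> y \<Longrightarrow> y \<le> 1 \<Longrightarrow> 0 \<le> cop b x y \<and> cop b x y \<le> 1"
  by (auto simp: cop_def)
lemma cop_2inc: "x \<le> x' \<Longrightarrow> y \<le> y' \<Longrightarrow> 0 \<le> cop b x' y' - cop b x y' - cop b x' y + cop b x y"
  by (auto simp: cop_def max_def min_def)

context fixes s :: seg assumes v: "valid_seg s" begin
lemma F1s_range: "0 \<le> F1s s u" "F1s s u \<le> 1" by (auto simp: F1s_def clamp01_range)
lemma F2s_range: "0 \<le> F2s s u" "F2s s u \<le> 1" by (auto simp: F2s_def clamp01_range)
lemma F1s_0: "F1s s 0 = 0"
proof -
  have "0 \<le> sx s / sh s" using v by (simp add: valid_seg_def)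
  then show ?thesis by (simp add: F1s_def clamp01_def)
qed
lemma F2s_0: "F2s s 0 = 0"
proof -
  have "0 \<le> sy s / sk s" using v by (simp add: valid_seg_def)
  then show ?thesis by (simp add: F2s_def clamp01_def)
qed
lemma F1s_1: "F1s s 1 = 1" using v by (auto simp: F1s_def clamp01_def valid_seg_def field_simps)
lemma F2s_1: "F2s s 1 = 1" using v by (auto simp: F2s_def clamp01_def valid_seg_def field_simps)
lemma F1s_mono: "x \<le> y \<Longrightarrow> F1s s x \<le> F1s s y"
proof -
  assume "x \<le> y"
  moreover have "0 < sh s" using v by (simp add: valid_seg_def)
  ultimately show ?thesis unfolding F1s_def by (intro clamp01_mono divide_right_mono) auto
qed
lemma F2s_mono: "x \<le> y \<Longrightarrow> F2s s x \<le> F2s s y"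
proof -
  assume "x \<le> y"
  moreover have "0 < sk s" using v by (simp add: valid_seg_def)
  ultimately show ?thesis unfolding F2s_def by (intro clamp01_mono divide_right_mono) auto
qed
lemma Rs_0l: "Rs s 0 u = 0" by (simp add: Rs_def F1s_0 cop_0l F2s_range)
lemma Rs_0r: "Rs s u 0 = 0" by (simp add: Rs_def F2s_0 cop_0r F1s_range)
lemma Rs_1r: "Rs s u 1 = F1s s u" by (simp add: Rs_def F2s_1 cop_1r F1s_range)
lemma Rs_1l: "Rs s 1 u = F2s s u" by (simp add: Rs_def F1s_1 cop_1l F2s_range)
lemma Rs_range: "0 \<le> Rs s u1 u2" "Rs s u1 u2 \<le> 1"
  using cop_range[OF F1s_range F2s_range] by (auto simp: Rs_def)
lemma Rs_2inc: "a1 \<le> b1 \<Longrightarrow> a2 \<le> b2 \<Longrightarrow> 0 \<le> Rs s b1 b2 - Rs s a1 b2 - Rs s b1 a2 + Rs s a1 a2"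
  unfolding Rs_def by (intro cop_2inc F1s_mono F2s_mono)
lemma F1s_cont: "continuous_on UNIV (F1s s)"
proof -
  have "sh s \<noteq> 0" using v by (simp add: valid_seg_def)
  then show ?thesis unfolding F1s_def[abs_def] by (intro clamp01_cont continuous_intros) auto
qed
lemma F2s_cont: "continuous_on UNIV (F2s s)"
proof -
  have "sk s \<noteq> 0" using v by (simp add: valid_seg_def)
  then show ?thesis unfolding F2s_def[abs_def] by (intro clamp01_cont continuous_intros) auto
qed
end

context layout begin

definition segat :: "real \<Rightarrow> seg" where
  "segat t = (if \<exists>q\<in>Q. t \<in> T q then sg (SOME q. q \<in> Q \<and> t \<in> T q) else dflt)"

lemma kern_segat: "kern t = segmeas (segat t)"
  by (simp add: kern_def segat_def)

lemma valid_segat: "valid_seg (segat t)"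
proof (cases "\<exists>q\<in>Q. t \<in> T q")
  case True
  then have "(SOME q. q \<in> Q \<and> t \<in> T q) \<in> Q" by (metis (mono_tags, lifting) someI_ex)
  then show ?thesis using True valid by (simp add: segat_def)
qed (simp add: segat_def valid_dflt)

lemma kern_rect: "measure (kern t) ({0..u1} \<times> {0..u2}) = Rs (segat t) u1 u2"
  by (simp add: kern_segat measure_rect_segmeas valid_segat)

lemma mu_formula: assumes "q \<in> Q" shows "mu q v = max 0 (min (len q) (v - st q))"
proof -
  have s0: "0 \<le> st q" "0 \<le> len q" using assms st_nn len_nn by auto
  consider "v < st q" | "st q \<le> v" "v < st q + len q" | "st q + len q \<le> v" by linarith
  then show ?thesis
  proof cases
    case 1
    then have "T q \<inter> {0..v} = {}" by (auto simp: T_def)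
    then show ?thesis using 1 s0 by (simp add: mu_def)
  next
    case 2
    then have "T q \<inter> {0..v} = {st q..v}" using s0 by (auto simp: T_def)
    then show ?thesis using 2 s0 by (simp add: mu_def)
  next
    case 3
    then have "T q \<inter> {0..v} = {st q..<st q + len q}" using s0 by (auto simp: T_def)
    then show ?thesis using 3 s0 by (simp add: mu_def)
  qed
qed

lemma mu_0: assumes q: "q \<in> Q" shows "mu q 0 = 0"
  using st_nn[OF q] len_nn[OF q] by (simp add: mu_formula[OF q] max_def min_def)
lemma mu_1: assumes q: "q \<in> Q" shows "mu q 1 = len q"
  using st_nn[OF q] len_nn[OF q] st_le[OF q] by (simp add: mu_formula[OF q] max_def min_def)
lemma mu_mono: "q \<in> Q \<Longrightarrow> a \<le> b \<Longrightarrow> mu q a \<le> mu q b"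
  by (simp add: mu_formula)
lemma mu_range: "q \<in> Q \<Longrightarrow> 0 \<le> mu q v \<and> mu q v \<le> len q"
  using len_nn by (simp add: mu_formula)

lemma kern_11: "measure (kern t) ({0..1} \<times> {0..1}) = 1"
  by (simp add: kern_rect Rs_1r F1s_1 valid_segat)

lemma CL_11: assumes "0 \<le> s" shows "CL 1 1 s = s"
  unfolding CL_def kern_11 using assms by (simp add: set_integral_const)

lemma CL_copula3:
  assumes m1: "\<And>s. s \<in> unitI \<Longrightarrow> (\<Sum>q\<in>Q. len q * F1s (sg q) s) = s"
    and m2: "\<And>s. s \<in> unitI \<Longrightarrow> (\<Sum>q\<in>Q. len q * F2s (sg q) s) = s"
  shows "copula3 CL"
  unfolding copula3_def
proof (intro conjI ballI impI)
  fix x y assume x: "x \<in> unitI" and y: "y \<in> unitI"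
  then have y1: "y \<le> 1" "x \<le> 1" by (auto simp: unitI_def)
  show "CL 0 x y = 0" using y1 by (simp add: CL_formula Rs_0l valid)
  show "CL x 0 y = 0" using y1 by (simp add: CL_formula Rs_0r valid)
  show "CL x y 0 = 0" by (simp add: CL_formula mu_0)
next
  fix s assume s: "s \<in> unitI"
  show "CL s 1 1 = s" using m1[OF s] by (simp add: CL_formula Rs_1r valid mu_1 mult.commute)
  show "CL 1 s 1 = s" using m2[OF s] by (simp add: CL_formula Rs_1l valid mu_1 mult.commute)
  show "CL 1 1 s = s" using s by (simp add: CL_11 unitI_def)
next
  fix a1 b1 a2 b2 a3 b3 assume I: "a1 \<in> unitI" "b1 \<in> unitI" "a2 \<in> unitI" "b2 \<in> unitI" "a3 \<in> unitI" "b3 \<in> unitI"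
    and le: "a1 \<le> b1" "a2 \<le> b2" "a3 \<le> b3"
  have v: "a3 \<le> 1" "b3 \<le> 1" using I by (auto simp: unitI_def)
  have "CL b1 b2 b3 - CL a1 b2 b3 - CL b1 a2 b3 - CL b1 b2 a3 + CL a1 a2 b3 + CL a1 b2 a3 + CL b1 a2 a3 - CL a1 a2 a3
     = (\<Sum>q\<in>Q. (Rs (sg q) b1 b2 - Rs (sg q) a1 b2 - Rs (sg q) b1 a2 + Rs (sg q) a1 a2) * (mu q b3 - mu q a3))"
    using v by (simp add: CL_formula sum_subtractf[symmetric] sum.distrib[symmetric] algebra_simps)
  also have "\<dots> \<ge> 0"
    using le by (intro sum_nonneg mult_nonneg_nonneg Rs_2inc valid) (auto simp: mu_mono)
  finally show "CL b1 b2 b3 - CL a1 b2 b3 - CL b1 a2 b3 - CL b1 b2 a3 + CL a1 a2 b3 + CL a1 b2 a3 + CL b1 a2 a3 - CL a1 a2 a3 \<ge> 0" .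
qed

lemma CL_Cc:
  assumes m1: "\<And>s. s \<in> unitI \<Longrightarrow> (\<Sum>q\<in>Q. len q * F1s (sg q) s) = s"
    and m2: "\<And>s. s \<in> unitI \<Longrightarrow> (\<Sum>q\<in>Q. len q * F2s (sg q) s) = s"
  shows "CL \<in> Cc"
  unfolding Cc_def
proof (intro CollectI conjI exI)
  show "copula3 CL" using CL_copula3 m1 m2 by blast
  show "is_rcd CL kern" by (rule rcd)
  show "AE t in lborel. t \<in> unitI \<longrightarrow> continuous_on UNIV (\<lambda>u. measure (kern t) ({0..u} \<times> {0..1})) \<and>
         continuous_on UNIV (\<lambda>u. measure (kern t) ({0..1} \<times> {0..u}))"
    by (simp add: kern_rect Rs_1r Rs_1l valid_segat F1s_cont F2s_cont)
qed

end


lemma intA_lemma: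
  fixes h :: "real \<Rightarrow> real"
  assumes int01: "integrable lborel (indicator {0..1::real} :: real \<Rightarrow> real)"
    and A[measurable]: "A \<in> sets borel" and h[measurable]: "h \<in> borel_measurable borel"
    and hr: "\<And>t. 0 \<le> h t \<and> h t \<le> 1"
  shows "integrable lborel (\<lambda>t. indicator ({0..1} \<inter> A) t * h t)"
proof -
  have m: "(\<lambda>t. indicator ({0..1} \<inter> A) t * h t) \<in> borel_measurable lborel" by measurable
  have b: "AE x in lborel. norm (indicator ({0..1} \<inter> A) x * h x) \<le> norm (indicator {0..1::real} x :: real)"
    using hr by (auto simp: indicator_def abs_le_iff)
  show ?thesis by (rule Bochner_Integration.integrable_bound[OF int01 m b])
qed

lemma ae_eq_intervals:
  fixes f g :: "real \<Rightarrow> real"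
  assumes f[measurable]: "f \<in> borel_measurable borel" and g[measurable]: "g \<in> borel_measurable borel"
    and fr: "\<And>t. 0 \<le> f t \<and> f t \<le> 1" and gr: "\<And>t. 0 \<le> g t \<and> g t \<le> 1"
    and eq: "\<And>v. v \<in> {0..1} \<Longrightarrow> (LINT t:{0..v}|lborel. f t) = (LINT t:{0..v}|lborel. g t)"
  shows "AE t in lborel. t \<in> {0..1} \<longrightarrow> f t = g t"
proof -
  have int01: "integrable lborel (indicator {0..1::real} :: real \<Rightarrow> real)"
    by (simp add: emeasure_lborel_Icc_eq)
  note intA = intA_lemma[OF int01]
  have key: "(LINT t|lborel. indicator ({0..1} \<inter> {x<..}) t * f t) = (LINT t|lborel. indicator ({0..1} \<inter> {x<..}) t * g t)" for x :: real
  proof -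
    consider "x < 0" | "1 \<le> x" | "0 \<le> x" "x < 1" by linarith
    then show ?thesis
    proof cases
      case 1
      then have "indicator ({0..1} \<inter> {x<..}) t = (indicator {0..1} t :: real)" for t
        by (auto simp: indicator_def)
      then show ?thesis using eq[of 1] by (simp add: set_lebesgue_integral_def)
    next
      case 2
      then have "indicator ({0..1} \<inter> {x<..}) t = (0 :: real)" for t
        by (auto simp: indicator_def)
      then show ?thesis by simp
    next
      case 3
      then have ind: "indicator ({0..1} \<inter> {x<..}) t * h t = indicator {0..1} t * h t - indicator {0..x} t * h t" for t and h :: "real \<Rightarrow> real"
        by (auto simp: indicator_def)
      have i1: "integrable lborel (\<lambda>t. indicator {0..1} t * h t)"
        if "h \<in> borel_measurable borel" "\<And>t. 0 \<le> h t \<and> h t \<le> 1" for h :: "real \<Rightarrow> real"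
        using intA[of UNIV h] that by simp
      have i2: "integrable lborel (\<lambda>t. indicator {0..x} t * h t)"
        if "h \<in> borel_measurable borel" "\<And>t. 0 \<le> h t \<and> h t \<le> 1" for h :: "real \<Rightarrow> real"
        using intA[of "{0..x}" h] that 3 by (simp add: Int_absorb1)
      have "(LINT t|lborel. indicator ({0..1} \<inter> {x<..}) t * f t) = (LINT t|lborel. indicator {0..1} t * f t) - (LINT t|lborel. indicator {0..x} t * f t)"
        unfolding ind by (rule Bochner_Integration.integral_diff[OF i1 i2]) (use fr in auto)
      also have "\<dots> = (LINT t|lborel. indicator {0..1} t * g t) - (LINT t|lborel. indicator {0..x} t * g t)"
        using eq[of 1] eq[of x] 3 by (simp add: set_lebesgue_integral_def)
      also have "\<dots> = (LINT t|lborel. indicator ({0..1} \<inter> {x<..}) t * g t)"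
        unfolding ind by (rule Bochner_Integration.integral_diff[OF i1 i2, symmetric]) (use gr in auto)
      finally show ?thesis .
    qed
  qed
  define F where "F = (\<lambda>t. ennreal (indicator {0..1} t * f t))"
  define G where "G = (\<lambda>t. ennreal (indicator {0..1} t * g t))"
  have [measurable]: "F \<in> borel_measurable borel" "G \<in> borel_measurable borel"
    unfolding F_def G_def by measurable
  have emF: "emeasure (density lborel F) {x<..} = ennreal (LINT t|lborel. indicator ({0..1} \<inter> {x<..}) t * f t)" for x
  proof -
    have "emeasure (density lborel F) {x<..} = (\<integral>\<^sup>+ t. F t * indicator {x<..} t \<partial>lborel)"
      by (rule emeasure_density) auto
    also have "\<dots> = (\<integral>\<^sup>+ t. ennreal (indicator ({0..1} \<inter> {x<..}) t * f t) \<partial>lborel)"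
      by (intro nn_integral_cong) (auto simp: F_def indicator_def)
    also have "\<dots> = ennreal (LINT t|lborel. indicator ({0..1} \<inter> {x<..}) t * f t)"
      using intA[of "{x<..}" f] fr by (intro nn_integral_eq_integral) auto
    finally show ?thesis .
  qed
  have emG: "emeasure (density lborel G) {x<..} = ennreal (LINT t|lborel. indicator ({0..1} \<inter> {x<..}) t * g t)" for x
  proof -
    have "emeasure (density lborel G) {x<..} = (\<integral>\<^sup>+ t. G t * indicator {x<..} t \<partial>lborel)"
      by (rule emeasure_density) auto
    also have "\<dots> = (\<integral>\<^sup>+ t. ennreal (indicator ({0..1} \<inter> {x<..}) t * g t) \<partial>lborel)"
      by (intro nn_integral_cong) (auto simp: G_def indicator_def)
    also have "\<dots> = ennreal (LINT t|lborel. indicator ({0..1} \<inter> {x<..}) t * g t)"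
      using intA[of "{x<..}" g] gr by (intro nn_integral_eq_integral) auto
    finally show ?thesis .
  qed
  have "density lborel F = density lborel G"
    by (rule measure_eqI_lessThan) (auto simp: emF emG key)
  then have "AE t in lborel. F t = G t"
    by (intro sigma_finite_measure.density_unique[OF sigma_finite_lborel]) auto
  then show ?thesis
  proof (rule AE_mp, intro AE_I2 impI)
    fix t assume "F t = G t" "t \<in> {0..1}"
    then show "f t = g t" using fr[of t] gr[of t] by (simp add: F_def G_def)
  qed
qed


lemma rat_approx_above:
  fixes u :: real
  assumes u: "u \<in> {0..1}"
  obtains r where "\<And>i. r i \<in> \<rat> \<inter> {0..1}" "decseq r" "(\<Inter>i. {0..r i}) = {0..u}"
proof -
  have "\<forall>i. \<exists>q\<in>\<rat>. u + (1/2)^(Suc i) < q \<and> q < u + (1/2)^i"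
  proof
    fix i :: nat
    have "u + (1/2)^(Suc i) < u + (1/2::real)^i" by simp
    then show "\<exists>q\<in>\<rat>. u + (1/2)^(Suc i) < q \<and> q < u + (1/2)^i"
      using Rats_dense_in_real by blast
  qed
  then obtain q where q: "\<And>i. q i \<in> \<rat>" "\<And>i. u + (1/2)^(Suc i) < q i" "\<And>i. q i < u + (1/2)^i"
    by metis
  define r where "r i = min 1 (q i)" for i
  have qu: "u < q i" for i
  proof -
    have "0 < (1/2::real)^Suc i" by simp
    then show ?thesis using q(2)[of i] by linarith
  qed
  have "r i \<in> \<rat> \<inter> {0..1}" for i
    using q(1)[of i] qu[of i] u by (auto simp: r_def min_def)
  moreover have "decseq r"
  proof (rule decseq_SucI)
    fix i have "q (Suc i) \<le> q i" using q(3)[of "Suc i"] q(2)[of i] by simp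
    then show "r (Suc i) \<le> r i" by (simp add: r_def)
  qed
  moreover have "(\<Inter>i. {0..r i}) = {0..u}"
  proof (intro equalityI subsetI)
    fix x assume x: "x \<in> (\<Inter>i. {0..r i})"
    have "x \<le> u"
    proof (rule ccontr)
      assume "\<not> x \<le> u"
      then have "0 < x - u" by simp
      then obtain i where i: "(1/2::real)^i < x - u" using real_arch_pow_inv[of "x - u" "1/2"] by auto
      have "x \<le> r i" using x by auto
      also have "\<dots> \<le> q i" by (simp add: r_def)
      also have "\<dots> < u + (1/2)^i" by (rule q(3))
      finally show False using i by simp
    qed
    then show "x \<in> {0..u}" using x by auto
  next
    fix x assume "x \<in> {0..u}"
    then show "x \<in> (\<Inter>i. {0..r i})" using qu u by (auto simp: r_def) (smt (verit) qu)
  qed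
  ultimately show ?thesis using that by blast
qed

lemma markov_meas:
  assumes "markov_kernel K" "E \<in> sets borel"
  shows "(\<lambda>t. measure (K t) E) \<in> borel_measurable borel"
  using assms unfolding markov_kernel_def by (simp add: measurable_lborel1)

lemma markov_prob:
  assumes "markov_kernel K"
  shows "prob_space (K t)" "sets (K t) = sets borel"
  using assms unfolding markov_kernel_def by auto

lemma rect_borel: "{0..a::real} \<times> {0..b::real} \<in> sets borel"
  by (intro borel_closed closed_Times) auto

lemma rcd_unique_fixed:
  assumes r1: "is_rcd C K1" and r2: "is_rcd C K2" and u: "u1 \<in> {0..1}" "u2 \<in> {0..1}"
  shows "AE t in lborel. t \<in> {0..1} \<longrightarrow> measure (K1 t) ({0..u1}\<times>{0..u2}) = measure (K2 t) ({0..u1}\<times>{0..u2})"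
proof (rule ae_eq_intervals)
  have m1: "markov_kernel K1" and m2: "markov_kernel K2" using r1 r2 by (auto simp: is_rcd_def)
  show "(\<lambda>t. measure (K1 t) ({0..u1}\<times>{0..u2})) \<in> borel_measurable borel"
    by (rule markov_meas[OF m1 rect_borel])
  show "(\<lambda>t. measure (K2 t) ({0..u1}\<times>{0..u2})) \<in> borel_measurable borel"
    by (rule markov_meas[OF m2 rect_borel])
  show "0 \<le> measure (K1 t) ({0..u1}\<times>{0..u2}) \<and> measure (K1 t) ({0..u1}\<times>{0..u2}) \<le> 1" for t
    using prob_space.prob_le_1[OF markov_prob(1)[OF m1]] by auto
  show "0 \<le> measure (K2 t) ({0..u1}\<times>{0..u2}) \<and> measure (K2 t) ({0..u1}\<times>{0..u2}) \<le> 1" for t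
    using prob_space.prob_le_1[OF markov_prob(1)[OF m2]] by auto
  fix v :: real assume v: "v \<in> {0..1}"
  show "(LINT t:{0..v}|lborel. measure (K1 t) ({0..u1}\<times>{0..u2})) = (LINT t:{0..v}|lborel. measure (K2 t) ({0..u1}\<times>{0..u2}))"
    using r1 r2 u v unfolding is_rcd_def unitI_def by metis
qed

lemma rcd_unique:
  assumes r1: "is_rcd C K1" and r2: "is_rcd C K2"
  shows "AE t in lborel. t \<in> {0..1} \<longrightarrow> (\<forall>u1\<in>{0..1}. \<forall>u2\<in>{0..1}.
            measure (K1 t) ({0..u1}\<times>{0..u2}) = measure (K2 t) ({0..u1}\<times>{0..u2}))"
proof -
  have m1: "markov_kernel K1" and m2: "markov_kernel K2" using r1 r2 by (auto simp: is_rcd_def)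
  define X where "X = \<rat> \<inter> {0..1::real}"
  have cX: "countable X" unfolding X_def by (rule countable_Int1[OF countable_rat])
  have "AE t in lborel. \<forall>a\<in>X. \<forall>b\<in>X. t \<in> {0..1} \<longrightarrow> measure (K1 t) ({0..a}\<times>{0..b}) = measure (K2 t) ({0..a}\<times>{0..b})"
  proof (rule AE_ball_countable'[OF _ cX])
    fix a assume a: "a \<in> X"
    show "AE t in lborel. \<forall>b\<in>X. t \<in> {0..1} \<longrightarrow> measure (K1 t) ({0..a}\<times>{0..b}) = measure (K2 t) ({0..a}\<times>{0..b})"
    proof (rule AE_ball_countable'[OF _ cX])
      fix b assume b: "b \<in> X"
      show "AE t in lborel. t \<in> {0..1} \<longrightarrow> measure (K1 t) ({0..a}\<times>{0..b}) = measure (K2 t) ({0..a}\<times>{0..b})"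
        using a b by (intro rcd_unique_fixed[OF r1 r2]) (auto simp: X_def)
    qed
  qed
  then show ?thesis
  proof (rule AE_mp, intro AE_I2 impI ballI)
    fix t u1 u2 :: real assume H: "\<forall>a\<in>X. \<forall>b\<in>X. t \<in> {0..1} \<longrightarrow> measure (K1 t) ({0..a}\<times>{0..b}) = measure (K2 t) ({0..a}\<times>{0..b})"
      and t: "t \<in> {0..1}" and u: "u1 \<in> {0..1}" "u2 \<in> {0..1}"
    obtain r1 where r1: "\<And>i. r1 i \<in> X" "decseq r1" "(\<Inter>i. {0..r1 i}) = {0..u1}"
      using rat_approx_above[OF u(1)] unfolding X_def by metis
    obtain r2 where r2: "\<And>i. r2 i \<in> X" "decseq r2" "(\<Inter>i. {0..r2 i}) = {0..u2}"
      using rat_approx_above[OF u(2)] unfolding X_def by metis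
    define A where "A i = {0..r1 i} \<times> {0..r2 i}" for i
    have dA: "decseq A"
      using r1(2) r2(2) unfolding A_def decseq_def by (auto simp: subset_eq) (meson order_trans)+
    have IA: "(\<Inter>i. A i) = {0..u1} \<times> {0..u2}"
    proof -
      have "(\<Inter>i. A i) = (\<Inter>i. {0..r1 i}) \<times> (\<Inter>i. {0..r2 i})" unfolding A_def by auto
      then show ?thesis using r1(3) r2(3) by simp
    qed
    have lim: "(\<lambda>i. measure (K t) (A i)) \<longlonglongrightarrow> measure (K t) ({0..u1} \<times> {0..u2})" if m: "markov_kernel K" for K
    proof -
      have "(\<lambda>i. measure (K t) (A i)) \<longlonglongrightarrow> measure (K t) (\<Inter>i. A i)"
      proof (rule Lim_measure_decseq)
        show "range A \<subseteq> sets (K t)" using markov_prob(2)[OF m] rect_borel by (auto simp: A_def)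
        show "decseq A" by (rule dA)
        show "emeasure (K t) (A i) \<noteq> \<infinity>" for i
          using finite_measure.emeasure_finite[OF prob_space.axioms(1)[OF markov_prob(1)[OF m]]] by simp
      qed
      then show ?thesis using IA by simp
    qed
    have "(\<lambda>i. measure (K1 t) (A i)) = (\<lambda>i. measure (K2 t) (A i))"
      using H t r1(1) r2(1) by (auto simp: A_def)
    then show "measure (K1 t) ({0..u1}\<times>{0..u2}) = measure (K2 t) ({0..u1}\<times>{0..u2})"
      using lim[OF m1] lim[OF m2] LIMSEQ_unique by metis
  qed
qed


lemma complete_AE_measurable:
  fixes f g :: "'a \<Rightarrow> real"
  assumes g: "g \<in> borel_measurable (completion M)" and ae: "AE x in completion M. f x = g x"
  shows "f \<in> borel_measurable (completion M)"
proof (rule measurableI)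
  fix x show "f x \<in> space borel" by simp
next
  fix B :: "real set" assume B: "B \<in> sets borel"
  have A: "g -` B \<inter> space (completion M) \<in> sets (completion M)"
    using measurable_sets[OF g B] .
  show "f -` B \<inter> space (completion M) \<in> sets (completion M)"
  proof (rule completion.in_sets_AE[OF _ A])
    show "AE x in completion M. (x \<in> g -` B \<inter> space (completion M)) = (x \<in> f -` B \<inter> space (completion M))"
      using ae by (rule AE_mp) (auto intro!: AE_I2)
  qed auto
qed

lemma lebesgue_set_integral_AE:
  fixes f g :: "real \<Rightarrow> real"
  assumes g[measurable]: "g \<in> borel_measurable borel" and A[measurable]: "A \<in> sets borel"
    and ae: "AE x in lborel. x \<in> A \<longrightarrow> f x = g x"
  shows "(LINT x:A|lebesgue. f x) = (LINT x:A|lborel. g x)"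
proof -
  have gm: "(\<lambda>x. indicator A x *\<^sub>R g x) \<in> borel_measurable (completion lborel)"
    by (intro measurable_completion) measurable
  have ae': "AE x in completion lborel. indicator A x *\<^sub>R f x = indicator A x *\<^sub>R g x"
    using AE_completion[OF ae] by (rule AE_mp) (auto intro!: AE_I2 simp: indicator_def)
  have fm: "(\<lambda>x. indicator A x *\<^sub>R f x) \<in> borel_measurable (completion lborel)"
    by (rule complete_AE_measurable[OF gm ae'])
  have "(LINT x:A|lebesgue. f x) = (LINT x|completion lborel. indicator A x *\<^sub>R g x)"
    unfolding set_lebesgue_integral_def by (rule integral_cong_AE[OF fm gm ae'])
  also have "\<dots> = (LINT x|lborel. indicator A x *\<^sub>R g x)"
    by (rule integral_completion) measurable
  finally show ?thesis by (simp add: set_lebesgue_integral_def)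
qed

context layout begin

lemma segat_sum:
  "(\<phi> (segat t) :: real) = (\<Sum>q\<in>Q. indicator (T q) t * \<phi> (sg q)) + indicator Rst t * \<phi> dflt"
proof (cases "t \<in> Rst")
  case True
  then have "\<not> (\<exists>q\<in>Q. t \<in> T q)" by (auto simp: Rst_def)
  then show ?thesis using True by (simp add: segat_def ind_sum_out)
next
  case False
  then obtain q0 where q0: "q0 \<in> Q" "t \<in> T q0" by (auto simp: Rst_def)
  have "(SOME q. q \<in> Q \<and> t \<in> T q) = q0"
    using q0 T_disj by (intro some_equality) auto
  then show ?thesis using False q0 by (auto simp: segat_def ind_sum_in[OF q0])
qed

lemma segat_meas[measurable]: "(\<lambda>t. (\<phi> (segat t) :: real)) \<in> borel_measurable borel"
  by (subst segat_sum) measurable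

lemma integ_segat:
  assumes v: "v \<le> 1"
  shows "(LINT t:{0..v}|lborel. (\<phi> (segat t) :: real)) = (\<Sum>q\<in>Q. \<phi> (sg q) * mu q v)"
proof -
  have fin: "emeasure lborel (A \<inter> {0..v}) < \<infinity>" for A
    by (rule fin_emeasure_Icc[of _ 0 v]) auto
  have "(LINT t:{0..v}|lborel. \<phi> (segat t)) = (LINT t|lborel. (\<Sum>q\<in>Q. \<phi> (sg q) * indicator (T q \<inter> {0..v}) t) + \<phi> dflt * indicator (Rst \<inter> {0..v}) t)"
    unfolding set_lebesgue_integral_def
    by (subst segat_sum, intro Bochner_Integration.integral_cong refl) (auto simp: indicator_def sum_distrib_left ac_simps)
  also have "\<dots> = (\<Sum>q\<in>Q. \<phi> (sg q) * mu q v) + \<phi> dflt * measure lborel (Rst \<inter> {0..v})"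
    using fin by (simp add: mu_def)
  also have "measure lborel (Rst \<inter> {0..v}) = 0"
  proof -
    have "Rst \<inter> {0..v} \<subseteq> Rst \<inter> {0..1}" using v by auto
    then have "Rst \<inter> {0..v} \<in> null_sets lborel"
      by (intro null_sets_subset[OF Rst_null]) auto
    then show ?thesis by (simp add: measure_eq_0_null_sets)
  qed
  finally show ?thesis by simp
qed

definition Pc :: "real \<Rightarrow> real \<Rightarrow> real" where
  "Pc s1 s2 = (\<Sum>q\<in>Q. len q * cop (styp (sg q)) s1 s2)"

lemma KC_rcd: "is_rcd CL (KC CL)"
  unfolding KC_def by (rule someI[of "is_rcd CL", OF rcd])

lemma AE_good: "AE t in lborel. t \<in> {0..1} \<longrightarrow> (\<forall>u1\<in>{0..1}. \<forall>u2\<in>{0..1}.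
    measure (KC CL t) ({0..u1}\<times>{0..u2}) = Rs (segat t) u1 u2)"
  using rcd_unique[OF KC_rcd rcd] by (simp add: kern_rect)

context
  fixes t assumes good: "\<forall>u1\<in>{0..1}. \<forall>u2\<in>{0..1}. measure (KC CL t) ({0..u1}\<times>{0..u2}) = Rs (segat t) u1 u2"
begin

lemma F13_good: "u \<in> {0..1} \<Longrightarrow> F13 CL u t = F1s (segat t) u"
  using good by (simp add: F13_def Rs_1r valid_segat)

lemma F23_good: "u \<in> {0..1} \<Longrightarrow> F23 CL u t = F2s (segat t) u"
  using good by (simp add: F23_def Rs_1l valid_segat)

lemma copula2_cop: "copula2 (cop b)"
  unfolding copula2_def unitI_def by (auto simp: cop_0l cop_0r cop_1l cop_1r intro: cop_2inc)

lemma condcop_good: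
  assumes s: "s1 \<in> {0..1}" "s2 \<in> {0..1}"
  shows "condcop CL t s1 s2 = cop (styp (segat t)) s1 s2"
proof -
  let ?s = "segat t"
  let ?P = "\<lambda>D. copula2 D \<and> (\<forall>u1\<in>unitI. \<forall>u2\<in>unitI.
         measure (KC CL t) ({0..u1} \<times> {0..u2}) = D (F13 CL u1 t) (F23 CL u2 t))"
  have ex: "?P (cop (styp ?s))"
    using good copula2_cop by (auto simp: unitI_def F13_good F23_good Rs_def)
  have P: "?P (condcop CL t)"
    unfolding condcop_def by (rule someI[of ?P, OF ex])
  have v: "valid_seg ?s" by (rule valid_segat)
  define u1 where "u1 = sx ?s + sh ?s * s1"
  define u2 where "u2 = sy ?s + sk ?s * s2"
  have u1: "u1 \<in> {0..1}" "F1s ?s u1 = s1"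
  proof -
    have a: "sh ?s * s1 \<le> sh ?s" "0 \<le> sh ?s * s1" using s v by (auto simp: valid_seg_def intro: mult_left_le)
    have b: "0 \<le> sx ?s" "sx ?s + sh ?s \<le> 1" using v by (auto simp: valid_seg_def)
    show "u1 \<in> {0..1}" unfolding u1_def using a b by auto
    show "F1s ?s u1 = s1" using s v by (auto simp: u1_def F1s_def clamp01_id valid_seg_def)
  qed
  have u2: "u2 \<in> {0..1}" "F2s ?s u2 = s2"
  proof -
    have a: "sk ?s * s2 \<le> sk ?s" "0 \<le> sk ?s * s2" using s v by (auto simp: valid_seg_def intro: mult_left_le)
    have b: "0 \<le> sy ?s" "sy ?s + sk ?s \<le> 1" using v by (auto simp: valid_seg_def)
    show "u2 \<in> {0..1}" unfolding u2_def using a b by auto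
    show "F2s ?s u2 = s2" using s v by (auto simp: u2_def F2s_def clamp01_id valid_seg_def)
  qed
  have "condcop CL t (F13 CL u1 t) (F23 CL u2 t) = measure (KC CL t) ({0..u1} \<times> {0..u2})"
    using P u1(1) u2(1) by (auto simp: unitI_def)
  also have "\<dots> = Rs ?s u1 u2" using good u1(1) u2(1) by auto
  finally show ?thesis using u1 u2 by (simp add: F13_good F23_good Rs_def)
qed

end

lemma partial_CL: assumes s: "s1 \<in> {0..1}" "s2 \<in> {0..1}" shows "partial_copula CL s1 s2 = Pc s1 s2"
proof -
  have "partial_copula CL s1 s2 = (LINT t:{0..1}|lborel. cop (styp (segat t)) s1 s2)"
    unfolding partial_copula_def unitI_def
  proof (rule lebesgue_set_integral_AE)
    show "(\<lambda>t. cop (styp (segat t)) s1 s2) \<in> borel_measurable borel" by measurable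
    show "AE x in lborel. x \<in> {0..1} \<longrightarrow> condcop CL x s1 s2 = cop (styp (segat x)) s1 s2"
      using AE_good by (rule AE_mp) (auto intro!: AE_I2 condcop_good s)
  qed simp
  also have "\<dots> = (\<Sum>q\<in>Q. cop (styp (sg q)) s1 s2 * mu q 1)"
    using integ_segat[of 1 "\<lambda>s. cop (styp s) s1 s2"] by simp
  also have "\<dots> = Pc s1 s2" by (auto simp: Pc_def mu_1 intro!: sum.cong)
  finally show ?thesis .
qed

lemma psi_CL:
  assumes u: "u1 \<in> {0..1}" "u2 \<in> {0..1}" and v: "v \<le> 1"
  shows "psi CL u1 u2 v = (\<Sum>q\<in>Q. Pc (F1s (sg q) u1) (F2s (sg q) u2) * mu q v)"
proof -
  have "psi CL u1 u2 v = (LINT t:{0..v}|lborel. Pc (F1s (segat t) u1) (F2s (segat t) u2))"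
    unfolding psi_def
  proof (rule lebesgue_set_integral_AE)
    show "(\<lambda>t. Pc (F1s (segat t) u1) (F2s (segat t) u2)) \<in> borel_measurable borel" by measurable
    show "AE x in lborel. x \<in> {0..v} \<longrightarrow> partial_copula CL (F13 CL u1 x) (F23 CL u2 x) = Pc (F1s (segat x) u1) (F2s (segat x) u2)"
      using AE_good
    proof (rule AE_mp, intro AE_I2 impI)
      fix x assume H: "x \<in> {0..1} \<longrightarrow> (\<forall>u1\<in>{0..1}. \<forall>u2\<in>{0..1}. measure (KC CL x) ({0..u1} \<times> {0..u2}) = Rs (segat x) u1 u2)"
        and x: "x \<in> {0..v}"
      then have g: "\<forall>u1\<in>{0..1}. \<forall>u2\<in>{0..1}. measure (KC CL x) ({0..u1} \<times> {0..u2}) = Rs (segat x) u1 u2"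
        using v by auto
      show "partial_copula CL (F13 CL u1 x) (F23 CL u2 x) = Pc (F1s (segat x) u1) (F2s (segat x) u2)"
        using F13_good[OF g] F23_good[OF g] u partial_CL F1s_range[OF valid_segat] F2s_range[OF valid_segat]
        by simp
    qed
  qed simp
  also have "\<dots> = (\<Sum>q\<in>Q. Pc (F1s (sg q) u1) (F2s (sg q) u2) * mu q v)"
    using v by (rule integ_segat)
  finally show ?thesis .
qed

end


context fixes C assumes C: "copula3 C" begin

lemma cop3_zero: "x \<in> unitI \<Longrightarrow> y \<in> unitI \<Longrightarrow> C 0 x y = 0 \<and> C x 0 y = 0 \<and> C x y 0 = 0"
  using C unfolding copula3_def by blast

lemma cop3_marg: "s \<in> unitI \<Longrightarrow> C s 1 1 = s \<and> C 1 s 1 = s \<and> C 1 1 s = s"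
  using C unfolding copula3_def by blast

lemma cop3_inc:
  "a1 \<in> unitI \<Longrightarrow> b1 \<in> unitI \<Longrightarrow> a2 \<in> unitI \<Longrightarrow> b2 \<in> unitI \<Longrightarrow> a3 \<in> unitI \<Longrightarrow> b3 \<in> unitI \<Longrightarrow>
   a1 \<le> b1 \<Longrightarrow> a2 \<le> b2 \<Longrightarrow> a3 \<le> b3 \<Longrightarrow>
   C b1 b2 b3 - C a1 b2 b3 - C b1 a2 b3 - C b1 b2 a3 + C a1 a2 b3 + C a1 b2 a3 + C b1 a2 a3 - C a1 a2 a3 \<ge> 0"
  using C unfolding copula3_def by blast

lemma I01: "0 \<in> unitI" "1 \<in> unitI" by (auto simp: unitI_def)

lemma cop3_lip1:
  assumes "x \<in> unitI" "x' \<in> unitI" "y \<in> unitI" "z \<in> unitI" "x \<le> x'"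
  shows "0 \<le> C x' y z - C x y z \<and> C x' y z - C x y z \<le> x' - x"
proof -
  have y: "0 \<le> y" "y \<le> 1" and z: "0 \<le> z" "z \<le> 1" using assms by (auto simp: unitI_def)
  have a: "C x' y z - C x y z - C x' 0 z - C x' y 0 + C x 0 z + C x y 0 + C x' 0 0 - C x 0 0 \<ge> 0"
    using assms y z I01 by (intro cop3_inc) auto
  have b: "C x' 1 z - C x 1 z - C x' y z - C x' 1 0 + C x y z + C x 1 0 + C x' y 0 - C x y 0 \<ge> 0"
    using assms y z I01 by (intro cop3_inc) auto
  have c: "C x' 1 1 - C x 1 1 - C x' 0 1 - C x' 1 z + C x 0 1 + C x 1 z + C x' 0 z - C x 0 z \<ge> 0"
    using assms y z I01 by (intro cop3_inc) auto
  show ?thesis using a b c assms cop3_zero cop3_marg I01 by simp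
qed

lemma cop3_lip2:
  assumes "x \<in> unitI" "y \<in> unitI" "y' \<in> unitI" "z \<in> unitI" "y \<le> y'"
  shows "0 \<le> C x y' z - C x y z \<and> C x y' z - C x y z \<le> y' - y"
proof -
  have x: "0 \<le> x" "x \<le> 1" and z: "0 \<le> z" "z \<le> 1" using assms by (auto simp: unitI_def)
  have a: "C x y' z - C 0 y' z - C x y z - C x y' 0 + C 0 y z + C 0 y' 0 + C x y 0 - C 0 y 0 \<ge> 0"
    using assms x z I01 by (intro cop3_inc) auto
  have b: "C 1 y' z - C x y' z - C 1 y z - C 1 y' 0 + C x y z + C x y' 0 + C 1 y 0 - C x y 0 \<ge> 0"
    using assms x z I01 by (intro cop3_inc) auto
  have c: "C 1 y' 1 - C 0 y' 1 - C 1 y 1 - C 1 y' z + C 0 y 1 + C 0 y' z + C 1 y z - C 0 y z \<ge> 0"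
    using assms x z I01 by (intro cop3_inc) auto
  show ?thesis using a b c assms cop3_zero cop3_marg I01 by simp
qed

lemma cop3_lip3:
  assumes "x \<in> unitI" "y \<in> unitI" "z \<in> unitI" "z' \<in> unitI" "z \<le> z'"
  shows "0 \<le> C x y z' - C x y z \<and> C x y z' - C x y z \<le> z' - z"
proof -
  have x: "0 \<le> x" "x \<le> 1" and y: "0 \<le> y" "y \<le> 1" using assms by (auto simp: unitI_def)
  have a: "C x y z' - C 0 y z' - C x 0 z' - C x y z + C 0 0 z' + C 0 y z + C x 0 z - C 0 0 z \<ge> 0"
    using assms x y I01 by (intro cop3_inc) auto
  have b: "C 1 y z' - C x y z' - C 1 0 z' - C 1 y z + C x 0 z' + C x y z + C 1 0 z - C x 0 z \<ge> 0"
    using assms x y I01 by (intro cop3_inc) auto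
  have c: "C 1 1 z' - C 0 1 z' - C 1 y z' - C 1 1 z + C 0 y z' + C 0 1 z + C 1 y z - C 0 y z \<ge> 0"
    using assms x y I01 by (intro cop3_inc) auto
  show ?thesis using a b c assms cop3_zero cop3_marg I01 by simp
qed

lemma cop3_mono:
  assumes "x \<in> unitI" "y \<in> unitI" "z \<in> unitI" "x' \<in> unitI" "y' \<in> unitI" "z' \<in> unitI"
    "x \<le> x'" "y \<le> y'" "z \<le> z'"
  shows "C x y z \<le> C x' y' z'" "C x' y' z' - C x y z \<le> (x' - x) + (y' - y) + (z' - z)"
proof -
  have 1: "0 \<le> C x' y z - C x y z \<and> C x' y z - C x y z \<le> x' - x" using assms by (intro cop3_lip1) auto
  have 2: "0 \<le> C x' y' z - C x' y z \<and> C x' y' z - C x' y z \<le> y' - y" using assms by (intro cop3_lip2) auto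
  have 3: "0 \<le> C x' y' z' - C x' y' z \<and> C x' y' z' - C x' y' z \<le> z' - z" using assms by (intro cop3_lip3) auto
  show "C x y z \<le> C x' y' z'" "C x' y' z' - C x y z \<le> (x' - x) + (y' - y) + (z' - z)"
    using 1 2 3 by linarith+
qed

end

lemma dinf_le:
  assumes "\<And>x y z. x \<in> unitI \<Longrightarrow> y \<in> unitI \<Longrightarrow> z \<in> unitI \<Longrightarrow> \<bar>A x y z - B x y z\<bar> \<le> c"
  shows "dinf A B \<le> c"
  unfolding dinf_def
proof (rule cSUP_least)
  show "unitI \<times> unitI \<times> unitI \<noteq> {}" by (auto simp: unitI_def)
  fix p assume "p \<in> unitI \<times> unitI \<times> unitI"
  then show "\<bar>A (fst p) (fst (snd p)) (snd (snd p)) - B (fst p) (fst (snd p)) (snd (snd p))\<bar> \<le> c"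
    using assms by auto
qed

lemma dinf_ge:
  assumes bd: "\<And>x y z. x \<in> unitI \<Longrightarrow> y \<in> unitI \<Longrightarrow> z \<in> unitI \<Longrightarrow> \<bar>A x y z - B x y z\<bar> \<le> K"
    and p: "x \<in> unitI" "y \<in> unitI" "z \<in> unitI"
  shows "\<bar>A x y z - B x y z\<bar> \<le> dinf A B"
  unfolding dinf_def
proof -
  let ?f = "\<lambda>p. \<bar>A (fst p) (fst (snd p)) (snd (snd p)) - B (fst p) (fst (snd p)) (snd (snd p))\<bar>"
  have "bdd_above (?f ` (unitI \<times> unitI \<times> unitI))"
    using bd by (intro bdd_aboveI[of _ K]) auto
  moreover have "(x, y, z) \<in> unitI \<times> unitI \<times> unitI" using p by auto
  ultimately have "?f (x, y, z) \<le> (SUP p \<in> unitI \<times> unitI \<times> unitI. ?f p)"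
    by (rule cSUP_upper2) simp
  then show "\<bar>A x y z - B x y z\<bar> \<le> (SUP p \<in> unitI \<times> unitI \<times> unitI. ?f p)" by simp
qed


definition vol3 :: "(nat \<Rightarrow> nat \<Rightarrow> nat \<Rightarrow> real) \<Rightarrow> nat \<Rightarrow> nat \<Rightarrow> nat \<Rightarrow> real" where
  "vol3 G i j k = G (Suc i) (Suc j) (Suc k) - G i (Suc j) (Suc k) - G (Suc i) j (Suc k) - G (Suc i) (Suc j) k
     + G i j (Suc k) + G i (Suc j) k + G (Suc i) j k - G i j k"

lemma tele3:
  "(\<Sum>i<a. \<Sum>j<b. \<Sum>k<c. vol3 G i j k) =
     G a b c - G 0 b c - G a 0 c - G a b 0 + G 0 0 c + G 0 b 0 + G a 0 0 - G 0 0 0"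
proof -
  have k: "(\<Sum>k<c. vol3 G i j k) = (G (Suc i) (Suc j) c - G i (Suc j) c - G (Suc i) j c + G i j c)
       - (G (Suc i) (Suc j) 0 - G i (Suc j) 0 - G (Suc i) j 0 + G i j 0)" for i j
    unfolding vol3_def
    using sum_lessThan_telescope[of "\<lambda>k. G (Suc i) (Suc j) k - G i (Suc j) k - G (Suc i) j k + G i j k" c]
    by (simp add: algebra_simps)
  have j: "(\<Sum>j<b. \<Sum>k<c. vol3 G i j k) =
       (G (Suc i) b c - G i b c) - (G (Suc i) 0 c - G i 0 c) - (G (Suc i) b 0 - G i b 0) + (G (Suc i) 0 0 - G i 0 0)" for i
    unfolding k
    using sum_lessThan_telescope[of "\<lambda>j. (G (Suc i) j c - G i j c) - (G (Suc i) j 0 - G i j 0)" b]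
    by (simp add: algebra_simps)
  show ?thesis
    unfolding j
    using sum_lessThan_telescope[of "\<lambda>i. G i b c - G i 0 c - G i b 0 + G i 0 0" a]
    by (simp add: algebra_simps)
qed

definition gridG :: "(real \<Rightarrow> real \<Rightarrow> real \<Rightarrow> real) \<Rightarrow> nat \<Rightarrow> nat \<Rightarrow> nat \<Rightarrow> nat \<Rightarrow> real" where
  "gridG C n a b c = C (real a / real n) (real b / real n) (real c / real n)"

definition gmass :: "(real \<Rightarrow> real \<Rightarrow> real \<Rightarrow> real) \<Rightarrow> nat \<Rightarrow> nat \<Rightarrow> nat \<Rightarrow> nat \<Rightarrow> real" where
  "gmass C n = vol3 (gridG C n)"

context fixes C and n :: nat assumes C: "copula3 C" and n: "1 \<le> n" begin

lemma grid_in: "a \<le> n \<Longrightarrow> real a / real n \<in> unitI"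
  using n by (auto simp: unitI_def divide_simps)

lemma zero_in: "0 \<in> unitI" by (simp add: unitI_def)

lemma gridG_sum: "a \<le> n \<Longrightarrow> b \<le> n \<Longrightarrow> c \<le> n \<Longrightarrow>
  (\<Sum>i<a. \<Sum>j<b. \<Sum>k<c. gmass C n i j k) = gridG C n a b c"
  unfolding gmass_def tele3 using cop3_zero[OF C] grid_in zero_in by (simp add: gridG_def)

lemma grid_in_Suc: "i < n \<Longrightarrow> (1 + real i) / real n \<in> unitI"
  using grid_in[of "Suc i"] by simp

lemma gmass_nn: "i < n \<Longrightarrow> j < n \<Longrightarrow> k < n \<Longrightarrow> 0 \<le> gmass C n i j k"
  unfolding gmass_def vol3_def gridG_def
  by (rule cop3_inc[OF C]) (use n in \<open>auto simp: grid_in grid_in_Suc divide_right_mono\<close>)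

lemma gridG_n3: "c \<le> n \<Longrightarrow> gridG C n n n c = real c / real n"
  using cop3_marg[OF C] grid_in n by (auto simp: gridG_def)
lemma gridG_n1: "a \<le> n \<Longrightarrow> gridG C n a n n = real a / real n"
  using cop3_marg[OF C] grid_in n by (auto simp: gridG_def)
lemma gridG_n2: "b \<le> n \<Longrightarrow> gridG C n n b n = real b / real n"
  using cop3_marg[OF C] grid_in n by (auto simp: gridG_def)

lemma gmass_row: assumes "i < n" shows "(\<Sum>j<n. \<Sum>k<n. gmass C n i j k) = 1 / real n"
proof -
  define F where "F i' = (\<Sum>j<n. \<Sum>k<n. gmass C n i' j k)" for i'
  have a: "(\<Sum>i'<Suc i. F i') = real (Suc i) / real n" "(\<Sum>i'<i. F i') = real i / real n"
    unfolding F_def using assms by (simp_all only: gridG_sum gridG_n1 Suc_leI less_imp_le order_refl)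
  have "(\<Sum>i'<Suc i. F i') = (\<Sum>i'<i. F i') + F i" by simp
  then have "F i = real (Suc i) / real n - real i / real n" using a by linarith
  then show ?thesis by (simp add: F_def diff_divide_distrib[symmetric])
qed

lemma gmass_col: assumes "j < n" shows "(\<Sum>i<n. \<Sum>k<n. gmass C n i j k) = 1 / real n"
proof -
  define F where "F j' = (\<Sum>i<n. \<Sum>k<n. gmass C n i j' k)" for j'
  have sw: "(\<Sum>i<n. \<Sum>j'<b. \<Sum>k<n. gmass C n i j' k) = (\<Sum>j'<b. F j')" for b
    unfolding F_def by (rule sum.swap)
  have a: "(\<Sum>j'<Suc j. F j') = real (Suc j) / real n" "(\<Sum>j'<j. F j') = real j / real n"
    unfolding sw[symmetric] using assms by (simp_all only: gridG_sum gridG_n2 Suc_leI less_imp_le order_refl)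
  have "(\<Sum>j'<Suc j. F j') = (\<Sum>j'<j. F j') + F j" by simp
  then have "F j = real (Suc j) / real n - real j / real n" using a by linarith
  then show ?thesis by (simp add: F_def diff_divide_distrib[symmetric])
qed

lemma gmass_slab: assumes "k < n" shows "(\<Sum>i<n. \<Sum>j<n. gmass C n i j k) = 1 / real n"
proof -
  define F where "F k' = (\<Sum>i<n. \<Sum>j<n. gmass C n i j k')" for k'
  have sw: "(\<Sum>i<n. \<Sum>j<n. \<Sum>k'<c. gmass C n i j k') = (\<Sum>k'<c. F k')" for c
  proof -
    have "(\<Sum>i<n. \<Sum>j<n. \<Sum>k'<c. gmass C n i j k') = (\<Sum>i<n. \<Sum>k'<c. \<Sum>j<n. gmass C n i j k')"
      by (rule sum.cong[OF refl], rule sum.swap)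
    also have "\<dots> = (\<Sum>k'<c. \<Sum>i<n. \<Sum>j<n. gmass C n i j k')" by (rule sum.swap)
    finally show ?thesis unfolding F_def .
  qed
  have a: "(\<Sum>k'<Suc k. F k') = real (Suc k) / real n" "(\<Sum>k'<k. F k') = real k / real n"
    unfolding sw[symmetric] using assms by (simp_all only: gridG_sum gridG_n3 Suc_leI less_imp_le order_refl)
  have "(\<Sum>k'<Suc k. F k') = (\<Sum>k'<k. F k') + F k" by simp
  then have "F k = real (Suc k) / real n - real k / real n" using a by linarith
  then show ?thesis by (simp add: F_def diff_divide_distrib[symmetric])
qed

end


lemma regroup:
  fixes g :: "nat \<Rightarrow> real" assumes n: "0 < n"
  shows "(\<Sum>p<a*n. g p) = (\<Sum>i<a. \<Sum>j<n. g (i*n+j))"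
proof -
  have "(\<Sum>p<a*n. g p) = (\<Sum>(i,j)\<in>{..<a}\<times>{..<n}. g (i*n+j))"
  proof (rule sum.reindex_bij_witness[where i="\<lambda>(i,j). i*n+j" and j="\<lambda>p. (p div n, p mod n)"])
    fix p assume p: "p \<in> {..<a*n}"
    show "(case (p div n, p mod n) of (i, j) \<Rightarrow> i * n + j) = p" by simp
    show "(p div n, p mod n) \<in> {..<a} \<times> {..<n}" using p n by (auto simp: less_mult_imp_div_less)
    show "(case (p div n, p mod n) of (i, j) \<Rightarrow> g (i * n + j)) = g p" by simp
  next
    fix c assume c: "c \<in> {..<a} \<times> {..<n}"
    then obtain i j where ij: "c = (i,j)" "i < a" "j < n" by auto
    have "i * n + j < a * n"
    proof -
      have "i * n + j < i * n + n" using ij by simp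
      also have "\<dots> = Suc i * n" by simp
      also have "\<dots> \<le> a * n" using ij by (intro mult_right_mono) auto
      finally show ?thesis .
    qed
    then show "(case c of (i, j) \<Rightarrow> i * n + j) \<in> {..<a * n}" using ij by simp
    show "((case c of (i, j) \<Rightarrow> i * n + j) div n, (case c of (i, j) \<Rightarrow> i * n + j) mod n) = c"
      using ij by simp
  qed
  also have "\<dots> = (\<Sum>i<a. \<Sum>j<n. g (i*n+j))" by (simp add: sum.cartesian_product)
  finally show ?thesis .
qed

lemma sum_if_less:
  fixes f :: "nat \<Rightarrow> real"
  assumes "a \<le> n" shows "(\<Sum>i<n. if i < a then f i else 0) = (\<Sum>i<a. f i)"
proof -
  have "(\<Sum>i<n. if i < a then f i else 0) = (\<Sum>i\<in>{i\<in>{..<n}. i < a}. f i)"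
    by (rule sum.inter_filter[symmetric]) simp
  also have "{i\<in>{..<n}. i < a} = {..<a}" using assms by auto
  finally show ?thesis .
qed

lemma sum_clamp: "(\<Sum>i<n. clamp01 (x - real i)) = max 0 (min (real n) x)"
proof (induction n)
  case (Suc n)
  then show ?case by (simp add: clamp01_def max_def min_def)
qed simp

lemma clamp_split: "clamp01 (2 * x) + clamp01 (2 * x - 1) = 2 * clamp01 x"
  by (simp add: clamp01_def max_def min_def)

locale gridm =
  fixes n :: nat and m :: "nat \<Rightarrow> nat \<Rightarrow> nat \<Rightarrow> real"
  assumes n1: "1 \<le> n"
    and mnn: "\<And>i j k. i < n \<Longrightarrow> j < n \<Longrightarrow> k < n \<Longrightarrow> 0 \<le> m i j k"
    and mrow: "\<And>i. i < n \<Longrightarrow> (\<Sum>j<n. \<Sum>k<n. m i j k) = 1 / real n"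
    and mcol: "\<And>j. j < n \<Longrightarrow> (\<Sum>i<n. \<Sum>k<n. m i j k) = 1 / real n"
    and mslab: "\<And>k. k < n \<Longrightarrow> (\<Sum>i<n. \<Sum>j<n. m i j k) = 1 / real n"
begin

abbreviation ci :: "nat \<times> nat \<times> nat \<Rightarrow> nat" where "ci c \<equiv> fst c"
abbreviation cj :: "nat \<times> nat \<times> nat \<Rightarrow> nat" where "cj c \<equiv> fst (snd c)"
abbreviation ck :: "nat \<times> nat \<times> nat \<Rightarrow> nat" where "ck c \<equiv> snd (snd c)"

definition Cn :: "(nat \<times> nat \<times> nat) set" where "Cn = {..<n} \<times> {..<n} \<times> {..<n}"
definition mm :: "nat \<times> nat \<times> nat \<Rightarrow> real" where "mm c = m (ci c) (cj c) (ck c)"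
definition wk :: "nat \<Rightarrow> nat \<Rightarrow> real" where "wk k p = m (p div n) (p mod n) k"
definition cst :: "nat \<times> nat \<times> nat \<Rightarrow> real" where
  "cst c = real (ck c) / real n + (\<Sum>p<ci c * n + cj c. wk (ck c) p)"

lemma n0: "0 < n" using n1 by simp
lemma Cn_iff: "c \<in> Cn \<longleftrightarrow> ci c < n \<and> cj c < n \<and> ck c < n" by (auto simp: Cn_def mem_Times_iff)
lemma finCn: "finite Cn" by (simp add: Cn_def)

lemma mm_nn: "c \<in> Cn \<Longrightarrow> 0 \<le> mm c" by (auto simp: Cn_def mm_def intro: mnn)

lemma wk_nn: "k < n \<Longrightarrow> p < n * n \<Longrightarrow> 0 \<le> wk k p"
  unfolding wk_def using n0 by (intro mnn) (auto simp: less_mult_imp_div_less)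

lemma wk_ij: "j < n \<Longrightarrow> wk k (i * n + j) = m i j k" by (simp add: wk_def)

lemma wk_total: "k < n \<Longrightarrow> (\<Sum>p<n*n. wk k p) = 1 / real n"
  using regroup[OF n0, of "wk k" n] mslab by (simp add: wk_ij)

lemma sum_mm: "(\<Sum>c\<in>Cn. mm c) = 1"
proof -
  have "(\<Sum>c\<in>Cn. mm c) = (\<Sum>i<n. \<Sum>j<n. \<Sum>k<n. m i j k)"
    by (simp add: Cn_def mm_def sum.cartesian_product case_prod_unfold)
  also have "\<dots> = (\<Sum>i<n. 1 / real n)" using mrow by simp
  also have "\<dots> = 1" using n0 by simp
  finally show ?thesis .
qed

lemma cell_pos: assumes c: "c \<in> Cn" shows "cst c + mm c = real (ck c) / real n + (\<Sum>p<Suc (ci c * n + cj c). wk (ck c) p)"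
  using c by (simp add: cst_def mm_def wk_ij Cn_iff)

lemma cell_bounds:
  assumes c: "c \<in> Cn"
  shows "real (ck c) / real n \<le> cst c" "cst c + mm c \<le> real (Suc (ck c)) / real n"
proof -
  have k: "ck c < n" and i: "ci c < n" and j: "cj c < n" using c by (auto simp: Cn_iff)
  have idx: "ci c * n + cj c < n * n"
  proof -
    have "ci c * n + cj c < ci c * n + n" using j by simp
    also have "\<dots> = Suc (ci c) * n" by simp
    also have "\<dots> \<le> n * n" using i by (intro mult_right_mono) auto
    finally show ?thesis .
  qed
  show "real (ck c) / real n \<le> cst c"
    unfolding cst_def using k idx by (auto intro!: sum_nonneg wk_nn)
  have "(\<Sum>p<Suc (ci c * n + cj c). wk (ck c) p) \<le> (\<Sum>p<n*n. wk (ck c) p)"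
    using idx k by (intro sum_mono2) (auto intro: wk_nn)
  also have "\<dots> = 1 / real n" using wk_total k by simp
  finally show "cst c + mm c \<le> real (Suc (ck c)) / real n"
    using cell_pos[OF c] by (simp add: add_divide_distrib)
qed

lemma cell_disj:
  assumes c: "c \<in> Cn" and c': "c' \<in> Cn" and ne: "c \<noteq> c'"
  shows "{cst c..<cst c + mm c} \<inter> {cst c'..<cst c' + mm c'} = {}"
proof -
  have ord: "cst c + mm c \<le> cst c'" if c: "c \<in> Cn" and c': "c' \<in> Cn"
    and lt: "ck c < ck c' \<or> (ck c = ck c' \<and> ci c * n + cj c < ci c' * n + cj c')" for c c'
  proof (cases "ck c < ck c'")
    case True
    have "cst c + mm c \<le> real (Suc (ck c)) / real n" by (rule cell_bounds(2)[OF c])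
    also have "\<dots> \<le> real (ck c') / real n" using True n0 by (intro divide_right_mono) auto
    also have "\<dots> \<le> cst c'" by (rule cell_bounds(1)[OF c'])
    finally show ?thesis .
  next
    case False
    then have k: "ck c = ck c'" and p: "ci c * n + cj c < ci c' * n + cj c'" using lt by auto
    have kn: "ck c < n" using c by (auto simp: Cn_iff)
    have idx: "ci c' * n + cj c' \<le> n * n"
    proof -
      have "ci c' * n + cj c' < ci c' * n + n" using c' by (simp add: Cn_iff)
      also have "\<dots> = Suc (ci c') * n" by simp
      also have "\<dots> \<le> n * n" using c' by (intro mult_right_mono) (auto simp: Cn_iff)
      finally show ?thesis by simp
    qed
    have "(\<Sum>p<Suc (ci c * n + cj c). wk (ck c) p) \<le> (\<Sum>p<ci c' * n + cj c'. wk (ck c) p)"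
      using p idx kn by (intro sum_mono2) (auto intro: wk_nn)
    then show ?thesis using cell_pos[OF c] k by (simp add: cst_def)
  qed
  have inj: "ci c * n + cj c \<noteq> ci c' * n + cj c'" if "ck c = ck c'"
  proof
    assume h: "ci c * n + cj c = ci c' * n + cj c'"
    have "(ci c * n + cj c) div n = ci c" "(ci c * n + cj c) mod n = cj c"
         "(ci c' * n + cj c') div n = ci c'" "(ci c' * n + cj c') mod n = cj c'"
      using c c' by (auto simp: Cn_iff)
    then have "ci c = ci c'" "cj c = cj c'" using h by metis+
    then show False using that ne by (simp add: prod_eq_iff)
  qed
  consider "ck c < ck c' \<or> (ck c = ck c' \<and> ci c * n + cj c < ci c' * n + cj c')"
    | "ck c' < ck c \<or> (ck c' = ck c \<and> ci c' * n + cj c' < ci c * n + cj c)"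
    using inj by (metis linorder_neqE_nat)
  then show ?thesis
  proof cases
    case 1 then show ?thesis using ord[OF c c'] by auto
  next
    case 2 then show ?thesis using ord[OF c' c] by auto
  qed
qed

end


lemma sum_bool: "(\<Sum>b\<in>(UNIV::bool set). f b) = f True + (f False :: real)"
  by (simp add: UNIV_bool)

definition OptS :: "nat \<Rightarrow> (nat \<times> bool) option set" where
  "OptS M = insert None (Some ` ({..<M} \<times> UNIV))"

lemma finOptS: "finite (OptS M)" by (simp add: OptS_def)

lemma sum_OptS: "(\<Sum>x\<in>OptS M. f x) = f None + (\<Sum>l<M. f (Some (l,True)) + f (Some (l,False)) :: real)"
proof -
  have "(\<Sum>x\<in>OptS M. f x) = f None + (\<Sum>x\<in>Some ` ({..<M} \<times> UNIV). f x)"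
    unfolding OptS_def by (subst sum.insert) auto
  also have "(\<Sum>x\<in>Some ` ({..<M} \<times> UNIV). f x) = (\<Sum>x\<in>{..<M} \<times> UNIV. f (Some x))"
    by (subst sum.reindex) auto
  also have "\<dots> = (\<Sum>l<M. \<Sum>b\<in>UNIV. f (Some (l,b)))"
    by (simp add: sum.cartesian_product)
  finally show ?thesis by (simp add: sum_bool)
qed

definition idx :: "nat \<times> bool \<Rightarrow> nat" where "idx p = 2 * fst p + (if snd p then 0 else 1)"

lemma idx_inj: "idx p = idx p' \<Longrightarrow> p = p'"
  by (cases p; cases p') (auto simp: idx_def split: if_splits; presburger)

lemma idx_lt: "fst p < M \<Longrightarrow> Suc (idx p) \<le> 2 * M"
  by (auto simp: idx_def)

context gridm begin

lemma piece_layout: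
  fixes Q :: "'q set" and cell :: "'q \<Rightarrow> nat \<times> nat \<times> nat" and off len :: "'q \<Rightarrow> real" and sg
  assumes fin: "finite Q"
    and cell: "\<And>q. q \<in> Q \<Longrightarrow> cell q \<in> Cn"
    and off: "\<And>q. q \<in> Q \<Longrightarrow> 0 \<le> off q"
    and len: "\<And>q. q \<in> Q \<Longrightarrow> 0 \<le> len q"
    and fit: "\<And>q. q \<in> Q \<Longrightarrow> off q + len q \<le> mm (cell q)"
    and same: "\<And>q q'. q \<in> Q \<Longrightarrow> q' \<in> Q \<Longrightarrow> q \<noteq> q' \<Longrightarrow> cell q = cell q' \<Longrightarrow>
                 {off q..<off q + len q} \<inter> {off q'..<off q' + len q'} = {}"
    and sum1: "(\<Sum>q\<in>Q. len q) = 1"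
    and valid: "\<And>q. q \<in> Q \<Longrightarrow> valid_seg (sg q)"
  shows "layout Q (\<lambda>q. cst (cell q) + off q) len sg"
proof
  show "finite Q" by (rule fin)
  fix q assume q: "q \<in> Q"
  show "0 \<le> len q" using len q .
  have b1: "real (ck (cell q)) / real n \<le> cst (cell q)" "cst (cell q) + mm (cell q) \<le> real (Suc (ck (cell q))) / real n"
    using cell_bounds[OF cell[OF q]] by auto
  show "0 \<le> cst (cell q) + off q" using b1 off[OF q] by (smt (verit) divide_nonneg_nonneg of_nat_0_le_iff)
  have "real (Suc (ck (cell q))) / real n \<le> 1" using cell[OF q] n0 by (auto simp: Cn_iff)
  then show "cst (cell q) + off q + len q \<le> 1" using b1 fit[OF q] by linarith
  show "valid_seg (sg q)" using valid q .
next
  show "(\<Sum>q\<in>Q. len q) = 1" by (rule sum1)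
next
  fix q q' assume q: "q \<in> Q" and q': "q' \<in> Q" and ne: "q \<noteq> q'"
  show "{cst (cell q) + off q..<cst (cell q) + off q + len q} \<inter> {cst (cell q') + off q'..<cst (cell q') + off q' + len q'} = {}"
  proof (cases "cell q = cell q'")
    case True
    then show ?thesis using same[OF q q' ne True] by (auto simp: disjoint_iff)
  next
    case False
    have "{cst (cell q) + off q..<cst (cell q) + off q + len q} \<subseteq> {cst (cell q)..<cst (cell q) + mm (cell q)}"
      using off[OF q] fit[OF q] by auto
    moreover have "{cst (cell q') + off q'..<cst (cell q') + off q' + len q'} \<subseteq> {cst (cell q')..<cst (cell q') + mm (cell q')}"
      using off[OF q'] fit[OF q'] by auto
    ultimately show ?thesis using cell_disj[OF cell[OF q] cell[OF q'] False] by blast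
  qed
qed

definition dseg :: "nat \<Rightarrow> nat \<Rightarrow> bool \<Rightarrow> seg" where
  "dseg i j b = Seg (real i / real n) (1 / real n) (real j / real n) (1 / real n) b"
definition llseg :: "nat \<Rightarrow> nat \<Rightarrow> seg" where
  "llseg i j = Seg (real i / real n) (1 / (2 * real n)) (real j / real n) (1 / (2 * real n)) True"
definition urseg :: "nat \<Rightarrow> nat \<Rightarrow> seg" where
  "urseg i j = Seg (real i / real n + 1 / (2 * real n)) (1 / (2 * real n)) (real j / real n + 1 / (2 * real n)) (1 / (2 * real n)) True"

lemma frac_le1: "i < n \<Longrightarrow> real i / real n + 1 / real n \<le> 1"
  using n0 by (simp add: add_divide_distrib[symmetric] divide_le_eq_1)

lemma valid_dseg: "i < n \<Longrightarrow> j < n \<Longrightarrow> valid_seg (dseg i j b)"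
  using frac_le1 n0 by (simp add: dseg_def valid_seg_def)
lemma valid_llseg: "i < n \<Longrightarrow> j < n \<Longrightarrow> valid_seg (llseg i j)"
proof -
  assume "i < n" "j < n"
  moreover have "1 / (2 * real n) \<le> 1 / real n" using n0 by (simp add: frac_le_eq)
  ultimately show ?thesis using frac_le1[of i] frac_le1[of j] n0 by (simp add: llseg_def valid_seg_def)
qed
lemma valid_urseg: "i < n \<Longrightarrow> j < n \<Longrightarrow> valid_seg (urseg i j)"
proof -
  assume "i < n" "j < n"
  moreover have "1 / (2 * real n) + 1 / (2 * real n) = 1 / real n" using n0 by simp
  ultimately show ?thesis using frac_le1[of i] frac_le1[of j] n0 by (simp add: urseg_def valid_seg_def)
qed

lemma rn0: "0 < real n" using n0 by simp

lemma aff1: "0 < (c::real) \<Longrightarrow> (s - a / c) / (1 / c) = c * s - a" by (simp add: field_simps)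
lemma aff2: "0 < (c::real) \<Longrightarrow> (s - a / c) / (1 / (2 * c)) = 2 * (c * s - a)" by (simp add: field_simps)
lemma aff3: "0 < (c::real) \<Longrightarrow> (s - (a / c + 1 / (2 * c))) / (1 / (2 * c)) = 2 * (c * s - a) - 1"
  by (simp add: field_simps)

lemma F1_dseg: "F1s (dseg i j b) s = clamp01 (real n * s - real i)"
  by (simp only: F1s_def dseg_def seg.sel aff1[OF rn0])
lemma F2_dseg: "F2s (dseg i j b) s = clamp01 (real n * s - real j)"
  by (simp only: F2s_def dseg_def seg.sel aff1[OF rn0])
lemma F1_ll: "F1s (llseg i j) s = clamp01 (2 * (real n * s - real i))"
  by (simp only: F1s_def llseg_def seg.sel aff2[OF rn0])
lemma F2_ll: "F2s (llseg i j) s = clamp01 (2 * (real n * s - real j))"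
  by (simp only: F2s_def llseg_def seg.sel aff2[OF rn0])
lemma F1_ur: "F1s (urseg i j) s = clamp01 (2 * (real n * s - real i) - 1)"
  by (simp only: F1s_def urseg_def seg.sel aff3[OF rn0])
lemma F2_ur: "F2s (urseg i j) s = clamp01 (2 * (real n * s - real j) - 1)"
  by (simp only: F2s_def urseg_def seg.sel aff3[OF rn0])

definition QE :: "((nat \<times> nat \<times> nat) \<times> bool) set" where "QE = Cn \<times> UNIV"
definition offE :: "(nat \<times> nat \<times> nat) \<times> bool \<Rightarrow> real" where "offE q = (if snd q then 0 else mm (fst q) / 2)"
definition lenE :: "(nat \<times> nat \<times> nat) \<times> bool \<Rightarrow> real" where "lenE q = mm (fst q) / 2"
definition stE :: "(nat \<times> nat \<times> nat) \<times> bool \<Rightarrow> real" where "stE q = cst (fst q) + offE q"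
definition sgE :: "(nat \<times> nat \<times> nat) \<times> bool \<Rightarrow> seg" where "sgE q = dseg (ci (fst q)) (cj (fst q)) (snd q)"

lemma sum_QE: "(\<Sum>q\<in>QE. f q) = (\<Sum>c\<in>Cn. f (c,True) + (f (c,False) :: real))"
proof -
  have "(\<Sum>q\<in>QE. f q) = (\<Sum>c\<in>Cn. \<Sum>b\<in>UNIV. f (c,b))"
    unfolding QE_def by (simp add: sum.cartesian_product)
  then show ?thesis by (simp add: sum_bool)
qed

lemma layoutE: "layout QE stE lenE sgE"
  unfolding stE_def[abs_def]
proof (rule piece_layout)
  show "finite QE" by (simp add: QE_def finCn)
  fix q assume q: "q \<in> QE"
  then have c: "fst q \<in> Cn" by (auto simp: QE_def)
  show "fst q \<in> Cn" by (rule c)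
  show "0 \<le> offE q" "0 \<le> lenE q" "offE q + lenE q \<le> mm (fst q)" using mm_nn[OF c] by (auto simp: offE_def lenE_def)
  show "valid_seg (sgE q)" using c by (auto simp: sgE_def Cn_iff intro: valid_dseg)
next
  fix q q' assume q: "q \<in> QE" "q' \<in> QE" "q \<noteq> q'" "fst q = fst q'"
  then have "snd q \<noteq> snd q'" by (auto simp: prod_eq_iff)
  then show "{offE q..<offE q + lenE q} \<inter> {offE q'..<offE q' + lenE q'} = {}"
    using q by (cases "snd q") (auto simp: offE_def lenE_def)
next
  show "(\<Sum>q\<in>QE. lenE q) = 1" by (simp add: sum_QE lenE_def sum_mm)
qed

end

locale gridM = gridm +
  fixes M :: nat
  assumes M1: "1 \<le> M"
begin

definition QF :: "((nat \<times> nat \<times> nat) \<times> (nat \<times> bool) option) set" where "QF = Cn \<times> OptS M"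
definition ell :: "nat \<times> nat \<times> nat \<Rightarrow> real" where "ell c = mm c / (4 * real M)"
definition offF :: "(nat \<times> nat \<times> nat) \<times> (nat \<times> bool) option \<Rightarrow> real" where
  "offF q = (case snd q of None \<Rightarrow> mm (fst q) / 2 | Some p \<Rightarrow> real (idx p) * ell (fst q))"
definition lenF :: "(nat \<times> nat \<times> nat) \<times> (nat \<times> bool) option \<Rightarrow> real" where
  "lenF q = (case snd q of None \<Rightarrow> mm (fst q) / 2 | Some p \<Rightarrow> ell (fst q))"
definition stF :: "(nat \<times> nat \<times> nat) \<times> (nat \<times> bool) option \<Rightarrow> real" where "stF q = cst (fst q) + offF q"
definition sgF :: "(nat \<times> nat \<times> nat) \<times> (nat \<times> bool) option \<Rightarrow> seg" where
  "sgF q = (case snd q of None \<Rightarrow> dseg (ci (fst q)) (cj (fst q)) False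
     | Some p \<Rightarrow> if snd p then llseg (ci (fst q)) (cj (fst q)) else urseg (ci (fst q)) (cj (fst q)))"

lemma sum_QF: "(\<Sum>q\<in>QF. f q) = (\<Sum>c\<in>Cn. f (c, None) + (\<Sum>l<M. f (c, Some (l,True)) + (f (c, Some (l,False)) :: real)))"
proof -
  have "(\<Sum>q\<in>QF. f q) = (\<Sum>c\<in>Cn. \<Sum>x\<in>OptS M. f (c,x))"
    unfolding QF_def by (simp add: sum.cartesian_product)
  then show ?thesis by (simp add: sum_OptS)
qed

lemma M0: "0 < real M" using M1 by simp

lemma ell_nn: "c \<in> Cn \<Longrightarrow> 0 \<le> ell c" using mm_nn M0 by (simp add: ell_def)

lemma ell_sum: "2 * real M * ell c = mm c / 2" using M0 by (simp add: ell_def)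

lemma layoutF: "layout QF stF lenF sgF"
  unfolding stF_def[abs_def]
proof (rule piece_layout)
  show "finite QF" by (simp add: QF_def finCn finOptS)
  fix q assume q: "q \<in> QF"
  then have c: "fst q \<in> Cn" and ox: "snd q \<in> OptS M" by (auto simp: QF_def)
  show "fst q \<in> Cn" by (rule c)
  show "0 \<le> offF q" "0 \<le> lenF q"
    using mm_nn[OF c] ell_nn[OF c] by (auto simp: offF_def lenF_def split: option.splits)
  show "offF q + lenF q \<le> mm (fst q)"
  proof (cases "snd q")
    case None then show ?thesis by (simp add: offF_def lenF_def)
  next
    case (Some p)
    then have "fst p < M" using ox by (auto simp: OptS_def)
    then have "real (Suc (idx p)) \<le> 2 * real M" using idx_lt by (metis of_nat_le_iff of_nat_mult of_nat_numeral)
    then have "real (Suc (idx p)) * ell (fst q) \<le> 2 * real M * ell (fst q)"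
      using ell_nn[OF c] by (intro mult_right_mono) auto
    then show ?thesis using Some ell_sum[of "fst q"] mm_nn[OF c] by (simp add: offF_def lenF_def algebra_simps)
  qed
  show "valid_seg (sgF q)" using c
    by (auto simp: sgF_def Cn_iff intro: valid_dseg valid_llseg valid_urseg split: option.splits)
next
  fix q q' assume q: "q \<in> QF" "q' \<in> QF" "q \<noteq> q'" "fst q = fst q'"
  then have ne: "snd q \<noteq> snd q'" by (auto simp: prod_eq_iff)
  have c: "fst q \<in> Cn" using q by (auto simp: QF_def)
  have key: "{offF q..<offF q + lenF q} \<inter> {offF q'..<offF q' + lenF q'} = {}"
    if q: "q \<in> QF" "q' \<in> QF" "fst q = fst q'" and ox: "snd q = Some p" "snd q' = Some p'" "idx p < idx p'" for q q' p p'
  proof -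
    have c: "fst q \<in> Cn" using q by (auto simp: QF_def)
    have "real (Suc (idx p)) \<le> real (idx p')" using ox by simp
    then have "real (Suc (idx p)) * ell (fst q) \<le> real (idx p') * ell (fst q)"
      using ell_nn[OF c] by (intro mult_right_mono) auto
    then show ?thesis using ox q by (auto simp: offF_def lenF_def algebra_simps)
  qed
  have key2: "{offF q..<offF q + lenF q} \<inter> {offF q'..<offF q' + lenF q'} = {}"
    if q: "q \<in> QF" "q' \<in> QF" "fst q = fst q'" and ox: "snd q = Some p" "snd q' = None" for q q' p
  proof -
    have c: "fst q \<in> Cn" and "fst p < M" using q ox by (auto simp: QF_def OptS_def)
    then have "real (Suc (idx p)) \<le> 2 * real M" using idx_lt by (metis of_nat_le_iff of_nat_mult of_nat_numeral)
    then have "real (Suc (idx p)) * ell (fst q) \<le> 2 * real M * ell (fst q)"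
      using ell_nn[OF c] by (intro mult_right_mono) auto
    then show ?thesis using ox q ell_sum[of "fst q"] by (auto simp: offF_def lenF_def algebra_simps)
  qed
  show "{offF q..<offF q + lenF q} \<inter> {offF q'..<offF q' + lenF q'} = {}"
  proof (cases "snd q")
    case None
    then obtain p' where p': "snd q' = Some p'" using ne by (cases "snd q'") auto
    show ?thesis using key2[OF q(2) q(1) q(4)[symmetric] p' None] by blast
  next
    case (Some p)
    show ?thesis
    proof (cases "snd q'")
      case None then show ?thesis using key2[OF q(1) q(2) q(4) Some None] by blast
    next
      case (Some p')
      then have "p \<noteq> p'" using \<open>snd q = Some p\<close> ne by auto
      then have "idx p \<noteq> idx p'" using idx_inj by metis
      then consider "idx p < idx p'" | "idx p' < idx p" by linarith
      then show ?thesis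
      proof cases
        case 1 then show ?thesis using key[OF q(1) q(2) q(4) \<open>snd q = Some p\<close> Some] by blast
      next
        case 2 then show ?thesis using key[OF q(2) q(1) q(4)[symmetric] Some \<open>snd q = Some p\<close>] by blast
      qed
    qed
  qed
next
  have "(\<Sum>q\<in>QF. lenF q) = (\<Sum>c\<in>Cn. mm c / 2 + 2 * real M * ell c)"
    by (simp add: sum_QF lenF_def ac_simps)
  also have "\<dots> = (\<Sum>c\<in>Cn. mm c)" by (simp add: ell_sum)
  finally show "(\<Sum>q\<in>QF. lenF q) = 1" by (simp add: sum_mm)
qed

end


lemma clamp_int_pos: "(i::nat) < i0 \<Longrightarrow> clamp01 (real i0 - real i) = 1"
  by (auto simp: clamp01_def)
lemma clamp_int_neg: "\<not> (i::nat) < i0 \<Longrightarrow> clamp01 (real i0 - real i) = 0"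
  by (auto simp: clamp01_def)

context gridm begin

sublocale E: layout QE stE lenE sgE by (rule layoutE)

lemma cellF1: assumes s: "s \<in> unitI" shows "(\<Sum>c\<in>Cn. mm c * clamp01 (real n * s - real (ci c))) = s"
proof -
  have "(\<Sum>c\<in>Cn. mm c * clamp01 (real n * s - real (ci c))) = (\<Sum>i<n. \<Sum>j<n. \<Sum>k<n. m i j k * clamp01 (real n * s - real i))"
    by (simp add: Cn_def mm_def sum.cartesian_product case_prod_unfold)
  also have "\<dots> = (\<Sum>i<n. clamp01 (real n * s - real i) * (\<Sum>j<n. \<Sum>k<n. m i j k))"
    by (simp add: sum_distrib_left sum_distrib_right ac_simps)
  also have "\<dots> = (\<Sum>i<n. clamp01 (real n * s - real i)) / real n"
    using mrow by (simp add: sum_divide_distrib)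
  also have "\<dots> = s" using s rn0 by (simp add: sum_clamp unitI_def)
  finally show ?thesis .
qed

lemma cellF2: assumes s: "s \<in> unitI" shows "(\<Sum>c\<in>Cn. mm c * clamp01 (real n * s - real (cj c))) = s"
proof -
  have "(\<Sum>c\<in>Cn. mm c * clamp01 (real n * s - real (cj c))) = (\<Sum>i<n. \<Sum>j<n. \<Sum>k<n. m i j k * clamp01 (real n * s - real j))"
    by (simp add: Cn_def mm_def sum.cartesian_product case_prod_unfold)
  also have "\<dots> = (\<Sum>j<n. \<Sum>i<n. \<Sum>k<n. m i j k * clamp01 (real n * s - real j))"
    by (rule sum.swap)
  also have "\<dots> = (\<Sum>j<n. clamp01 (real n * s - real j) * (\<Sum>i<n. \<Sum>k<n. m i j k))"
    by (simp add: sum_distrib_left sum_distrib_right ac_simps)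
  also have "\<dots> = (\<Sum>j<n. clamp01 (real n * s - real j)) / real n"
    using mcol by (simp add: sum_divide_distrib)
  also have "\<dots> = s" using s rn0 by (simp add: sum_clamp unitI_def)
  finally show ?thesis .
qed

lemma E_marg1: "s \<in> unitI \<Longrightarrow> (\<Sum>q\<in>QE. lenE q * F1s (sgE q) s) = s"
  using cellF1 by (simp add: sum_QE lenE_def sgE_def F1_dseg)
lemma E_marg2: "s \<in> unitI \<Longrightarrow> (\<Sum>q\<in>QE. lenE q * F2s (sgE q) s) = s"
  using cellF2 by (simp add: sum_QE lenE_def sgE_def F2_dseg)

lemma E_Cc: "E.CL \<in> Cc"
  by (rule E.CL_Cc[OF E_marg1 E_marg2])

lemma E_copula3: "copula3 E.CL"
  by (rule E.CL_copula3[OF E_marg1 E_marg2])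

lemma E_mu_grid:
  assumes q: "q \<in> QE" and k0: "k0 \<le> n"
  shows "E.mu q (real k0 / real n) = (if ck (fst q) < k0 then lenE q else 0)"
proof -
  have c: "fst q \<in> Cn" using q by (auto simp: QE_def)
  have b: "real (ck (fst q)) / real n \<le> cst (fst q)" "cst (fst q) + mm (fst q) \<le> real (Suc (ck (fst q))) / real n"
    using cell_bounds[OF c] by auto
  have o: "0 \<le> offE q" "offE q + lenE q \<le> mm (fst q)" "0 \<le> lenE q" using mm_nn[OF c] by (auto simp: offE_def lenE_def)
  show ?thesis
  proof (cases "ck (fst q) < k0")
    case True
    then have "real (Suc (ck (fst q))) / real n \<le> real k0 / real n" using rn0 by (intro divide_right_mono) auto
    then have "lenE q \<le> real k0 / real n - stE q" using b o by (simp add: stE_def)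
    then show ?thesis using True o by (simp add: E.mu_formula[OF q])
  next
    case False
    then have "real k0 / real n \<le> real (ck (fst q)) / real n" using rn0 by (intro divide_right_mono) auto
    then have "real k0 / real n - stE q \<le> 0" using b o by (simp add: stE_def)
    then show ?thesis using False o by (simp add: E.mu_formula[OF q] max_def min_def)
  qed
qed

lemma Rs_dseg_grid:
  assumes "i0 \<le> n" "j0 \<le> n"
  shows "Rs (dseg i j b) (real i0 / real n) (real j0 / real n) = (if i < i0 \<and> j < j0 then 1 else 0)"
proof -
  have "real n * (real i0 / real n) = real i0" "real n * (real j0 / real n) = real j0" using rn0 by auto
  then show ?thesis
    using clamp01_range[of "real j0 - real j"] clamp01_range[of "real i0 - real i"]
    by (auto simp: Rs_def F1_dseg F2_dseg clamp_int_pos clamp_int_neg cop_def min_def max_def)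
qed

lemma E_grid:
  assumes i0: "i0 \<le> n" and j0: "j0 \<le> n" and k0: "k0 \<le> n"
  shows "E.CL (real i0 / real n) (real j0 / real n) (real k0 / real n) = (\<Sum>i<i0. \<Sum>j<j0. \<Sum>k<k0. m i j k)"
proof -
  have v: "real k0 / real n \<le> 1" using k0 rn0 by (simp add: divide_le_eq_1)
  have "E.CL (real i0 / real n) (real j0 / real n) (real k0 / real n)
      = (\<Sum>q\<in>QE. Rs (sgE q) (real i0 / real n) (real j0 / real n) * E.mu q (real k0 / real n))"
    by (rule E.CL_formula[OF v])
  also have "\<dots> = (\<Sum>q\<in>QE. (if ci (fst q) < i0 \<and> cj (fst q) < j0 \<and> ck (fst q) < k0 then lenE q else 0))"
    using i0 j0 k0 by (intro sum.cong refl) (auto simp: sgE_def Rs_dseg_grid E_mu_grid)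
  also have "\<dots> = (\<Sum>c\<in>Cn. (if ci c < i0 \<and> cj c < j0 \<and> ck c < k0 then mm c / 2 else 0)
                                + (if ci c < i0 \<and> cj c < j0 \<and> ck c < k0 then mm c / 2 else 0))"
    by (simp only: sum_QE lenE_def fst_conv)
  also have "\<dots> = (\<Sum>c\<in>Cn. if ci c < i0 \<and> cj c < j0 \<and> ck c < k0 then mm c else 0)"
    by (intro sum.cong) auto
  also have "\<dots> = (\<Sum>c\<in>{c\<in>Cn. ci c < i0 \<and> cj c < j0 \<and> ck c < k0}. mm c)"
    by (rule sum.inter_filter[symmetric, OF finCn])
  also have "{c\<in>Cn. ci c < i0 \<and> cj c < j0 \<and> ck c < k0} = {..<i0} \<times> {..<j0} \<times> {..<k0}"
    using i0 j0 k0 by (auto simp: Cn_iff mem_Times_iff)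
  also have "(\<Sum>c\<in>{..<i0} \<times> {..<j0} \<times> {..<k0}. mm c) = (\<Sum>i<i0. \<Sum>j<j0. \<Sum>k<k0. m i j k)"
    by (simp add: mm_def sum.cartesian_product case_prod_unfold)
  finally show ?thesis .
qed

end

lemma seg_sum: assumes "0 \<le> (l::real)"
  shows "(\<Sum>r<N. max 0 (min l (x - real r * l))) = max 0 (min (real N * l) x)"
proof (induction N)
  case (Suc N)
  have "max 0 (min (real N * l) x) + max 0 (min l (x - real N * l)) = max 0 (min (real (Suc N) * l) x)"
  proof -
    have aux: "max 0 (min y x) + max 0 (min l (x - y)) = max 0 (min (y + l) x)" if "0 \<le> y" for y
      using assms that by (simp add: max_def min_def)
    have "real (Suc N) * l = real N * l + l" by (simp add: algebra_simps)
    then show ?thesis using aux[of "real N * l"] assms by simp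
  qed
  then show ?case using Suc by simp
qed simp

lemma sum_even_odd: "(\<Sum>r<2*(M::nat). f r) = (\<Sum>l<M. f (2*l) + (f (2*l+1) :: real))"
  by (induction M) (simp_all add: algebra_simps)

lemma alt_sum:
  fixes g :: "nat \<Rightarrow> real"
  assumes anti: "\<And>r r'. r \<le> r' \<Longrightarrow> g r' \<le> g r"
  shows "(\<Sum>l<M. g (2*l) - g (2*l+1)) \<le> g 0 - g (2*M)"
proof (induction M)
  case (Suc M)
  have "g (2*M+2) \<le> g (2*M+1)" by (rule anti) simp
  then show ?case using Suc by simp
qed simp

lemma alt_nonneg:
  fixes g :: "nat \<Rightarrow> real"
  assumes anti: "\<And>r r'. r \<le> r' \<Longrightarrow> g r' \<le> g r"
  shows "0 \<le> (\<Sum>l<M. g (2*l) - g (2*l+1))"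
  by (intro sum_nonneg) (use anti in \<open>auto\<close>)

lemma diag_split: "2 * min (clamp01 a) (clamp01 b) = min (clamp01 (2*a)) (clamp01 (2*b)) + min (clamp01 (2*a-1)) (clamp01 (2*b-1))"
  by (simp add: clamp01_def min_def max_def)

context layout begin

lemma Pc_range: assumes "s1 \<in> {0..1}" "s2 \<in> {0..1}" shows "0 \<le> Pc s1 s2 \<and> Pc s1 s2 \<le> 1"
proof -
  have c: "0 \<le> cop b s1 s2 \<and> cop b s1 s2 \<le> 1" for b using assms cop_range by auto
  have "0 \<le> Pc s1 s2" unfolding Pc_def using c len_nn by (intro sum_nonneg mult_nonneg_nonneg) auto
  moreover have "Pc s1 s2 \<le> (\<Sum>q\<in>Q. len q * 1)" unfolding Pc_def
  proof (rule sum_mono)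
    fix q assume "q \<in> Q"
    then show "len q * cop (styp (sg q)) s1 s2 \<le> len q * 1"
      using c len_nn by (intro mult_left_mono) auto
  qed
  ultimately show ?thesis using sum_len by simp
qed

lemma psi_bound:
  assumes "u1 \<in> {0..1}" "u2 \<in> {0..1}" "v \<in> {0..1}"
  shows "\<bar>psi CL u1 u2 v\<bar> \<le> 1"
proof -
  have "psi CL u1 u2 v = (\<Sum>q\<in>Q. Pc (F1s (sg q) u1) (F2s (sg q) u2) * mu q v)"
    using assms by (intro psi_CL) auto
  moreover have "0 \<le> (\<Sum>q\<in>Q. Pc (F1s (sg q) u1) (F2s (sg q) u2) * mu q v)"
    using Pc_range F1s_range[OF valid] F2s_range[OF valid] mu_range
    by (intro sum_nonneg mult_nonneg_nonneg) auto
  moreover have "(\<Sum>q\<in>Q. Pc (F1s (sg q) u1) (F2s (sg q) u2) * mu q v) \<le> (\<Sum>q\<in>Q. 1 * len q)"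
    using Pc_range F1s_range[OF valid] F2s_range[OF valid] mu_range
    by (intro sum_mono mult_mono) auto
  ultimately show ?thesis using sum_len by simp
qed

end

context gridM begin

sublocale F: layout QF stF lenF sgF by (rule layoutF)

lemma F_marg1: assumes s: "s \<in> unitI" shows "(\<Sum>q\<in>QF. lenF q * F1s (sgF q) s) = s"
proof -
  have cell: "lenF (c,None) * clamp01 x + (\<Sum>l<M. lenF (c,Some(l,True)) * clamp01 (2*x) + lenF (c,Some(l,False)) * clamp01 (2*x - 1)) = mm c * clamp01 x" for c x
  proof -
    have "(\<Sum>l<M. lenF (c,Some(l,True)) * clamp01 (2*x) + lenF (c,Some(l,False)) * clamp01 (2*x - 1)) = real M * (ell c * (clamp01 (2*x) + clamp01 (2*x - 1)))"
      by (simp add: lenF_def algebra_simps)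
    also have "\<dots> = 2 * real M * ell c * clamp01 x" by (simp add: clamp_split)
    finally show ?thesis by (simp add: lenF_def ell_sum)
  qed
  have "(\<Sum>q\<in>QF. lenF q * F1s (sgF q) s) = (\<Sum>c\<in>Cn. lenF (c,None) * clamp01 (real n * s - real (ci c))
     + (\<Sum>l<M. lenF (c,Some(l,True)) * clamp01 (2 * (real n * s - real (ci c))) + lenF (c,Some(l,False)) * clamp01 (2 * (real n * s - real (ci c)) - 1)))"
    by (simp only: sum_QF sgF_def F1_dseg F1_ll F1_ur option.case snd_conv fst_conv if_True if_False)
  also have "\<dots> = (\<Sum>c\<in>Cn. mm c * clamp01 (real n * s - real (ci c)))"
    by (simp only: cell)
  finally show ?thesis using cellF1[OF s] by simp
qed

lemma F_marg2: assumes s: "s \<in> unitI" shows "(\<Sum>q\<in>QF. lenF q * F2s (sgF q) s) = s"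
proof -
  have cell: "lenF (c,None) * clamp01 x + (\<Sum>l<M. lenF (c,Some(l,True)) * clamp01 (2*x) + lenF (c,Some(l,False)) * clamp01 (2*x - 1)) = mm c * clamp01 x" for c x
  proof -
    have "(\<Sum>l<M. lenF (c,Some(l,True)) * clamp01 (2*x) + lenF (c,Some(l,False)) * clamp01 (2*x - 1)) = real M * (ell c * (clamp01 (2*x) + clamp01 (2*x - 1)))"
      by (simp add: lenF_def algebra_simps)
    also have "\<dots> = 2 * real M * ell c * clamp01 x" by (simp add: clamp_split)
    finally show ?thesis by (simp add: lenF_def ell_sum)
  qed
  have "(\<Sum>q\<in>QF. lenF q * F2s (sgF q) s) = (\<Sum>c\<in>Cn. lenF (c,None) * clamp01 (real n * s - real (cj c))
     + (\<Sum>l<M. lenF (c,Some(l,True)) * clamp01 (2 * (real n * s - real (cj c))) + lenF (c,Some(l,False)) * clamp01 (2 * (real n * s - real (cj c)) - 1)))"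
    by (simp only: sum_QF sgF_def F2_dseg F2_ll F2_ur option.case snd_conv fst_conv if_True if_False)
  also have "\<dots> = (\<Sum>c\<in>Cn. mm c * clamp01 (real n * s - real (cj c)))"
    by (simp only: cell)
  finally show ?thesis using cellF2[OF s] by simp
qed

lemma F_Cc: "F.CL \<in> Cc"
  by (rule F.CL_Cc[OF F_marg1 F_marg2])

end


definition PP :: "real \<Rightarrow> real \<Rightarrow> real" where "PP s1 s2 = (min s1 s2 + max 0 (s1 + s2 - 1)) / 2"

lemma cl_vals:
  fixes d :: int
  shows "d \<ge> 1 \<Longrightarrow> clamp01 (2 * real_of_int d + 1) = 1 \<and> clamp01 (2 * real_of_int d) = 1 \<and> clamp01 (real_of_int d + 1/2) = 1"
    and "d = 0 \<Longrightarrow> clamp01 (2 * real_of_int d + 1) = 1 \<and> clamp01 (2 * real_of_int d) = 0 \<and> clamp01 (real_of_int d + 1/2) = 1/2"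
    and "d \<le> -1 \<Longrightarrow> clamp01 (2 * real_of_int d + 1) = 0 \<and> clamp01 (2 * real_of_int d) = 0 \<and> clamp01 (real_of_int d + 1/2) = 0"
  by (auto simp: clamp01_def)

lemma delta:
  fixes d1 d2 :: int
  shows "PP (clamp01 (2 * real_of_int d1 + 1)) (clamp01 (2 * real_of_int d2 + 1)) / 4
       + PP (clamp01 (2 * real_of_int d1)) (clamp01 (2 * real_of_int d2)) / 4
       - PP (clamp01 (real_of_int d1 + 1/2)) (clamp01 (real_of_int d2 + 1/2)) / 2
       = (if d1 = 0 \<and> d2 = 0 then 1/8 else 0)"
proof -
  have c1: "d1 \<ge> 1 \<or> d1 = 0 \<or> d1 \<le> -1" and c2: "d2 \<ge> 1 \<or> d2 = 0 \<or> d2 \<le> -1" by linarith+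
  from c1 c2 show ?thesis
    by (elim disjE) (simp_all add: cl_vals PP_def clamp01_def)
qed

context gridM begin

lemma ell4: "4 * real M * ell c = mm c" using M0 by (simp add: ell_def)

lemma E_Pc: "E.Pc s1 s2 = PP s1 s2"
proof -
  have cell: "lenE (c,True) * cop (styp (sgE (c,True))) s1 s2 + lenE (c,False) * cop (styp (sgE (c,False))) s1 s2 = mm c * PP s1 s2" for c
    by (simp add: lenE_def sgE_def dseg_def cop_def PP_def field_simps)
  have "E.Pc s1 s2 = (\<Sum>c\<in>Cn. mm c * PP s1 s2)"
    unfolding E.Pc_def sum_QE cell ..
  then show ?thesis by (simp add: sum_distrib_right[symmetric] sum_mm)
qed

lemma F_Pc: "F.Pc s1 s2 = PP s1 s2"
proof -
  have cell: "lenF (c,None) * cop (styp (sgF (c,None))) s1 s2 + (\<Sum>l<M. lenF (c,Some(l,True)) * cop (styp (sgF (c,Some(l,True)))) s1 s2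
     + lenF (c,Some(l,False)) * cop (styp (sgF (c,Some(l,False)))) s1 s2) = mm c * PP s1 s2" for c
  proof -
    have "(\<Sum>l<M. lenF (c,Some(l,True)) * cop (styp (sgF (c,Some(l,True)))) s1 s2
     + lenF (c,Some(l,False)) * cop (styp (sgF (c,Some(l,False)))) s1 s2) = 2 * real M * ell c * min s1 s2"
      by (simp add: lenF_def sgF_def llseg_def urseg_def cop_def)
    then show ?thesis using ell4[of c] by (simp add: lenF_def sgF_def dseg_def cop_def PP_def field_simps)
  qed
  have "F.Pc s1 s2 = (\<Sum>c\<in>Cn. mm c * PP s1 s2)"
    unfolding F.Pc_def sum_QF cell ..
  then show ?thesis by (simp add: sum_distrib_right[symmetric] sum_mm)
qed

lemma u_in: "i0 < n \<Longrightarrow> (2 * real i0 + 1) / (2 * real n) \<in> {0..1}"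
  using rn0 by (auto simp: divide_simps)

lemma u_shift: "real n * ((2 * real i0 + 1) / (2 * real n)) - real i = real_of_int (int i0 - int i) + 1/2"
  using rn0 by (simp add: field_simps)

lemma psi_gap:
  assumes i0: "i0 < n" and j0: "j0 < n"
  shows "psi F.CL ((2 * real i0 + 1) / (2 * real n)) ((2 * real j0 + 1) / (2 * real n)) 1
       - psi E.CL ((2 * real i0 + 1) / (2 * real n)) ((2 * real j0 + 1) / (2 * real n)) 1 = (\<Sum>k<n. m i0 j0 k) / 8"
proof -
  define u1 where "u1 = (2 * real i0 + 1) / (2 * real n)"
  define u2 where "u2 = (2 * real j0 + 1) / (2 * real n)"
  have u: "u1 \<in> {0..1}" "u2 \<in> {0..1}" using u_in i0 j0 by (auto simp: u1_def u2_def)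
  define d1 where "d1 c = int i0 - int (ci c)" for c
  define d2 where "d2 c = int j0 - int (cj c)" for c
  have sh1: "real n * u1 - real (ci c) = real_of_int (d1 c) + 1/2" for c unfolding u1_def d1_def by (rule u_shift)
  have sh2: "real n * u2 - real (cj c) = real_of_int (d2 c) + 1/2" for c unfolding u2_def d2_def by (rule u_shift)
  have two: "2 * (real_of_int d + 1/2) = 2 * real_of_int d + 1" "2 * (real_of_int d + 1/2) - 1 = 2 * real_of_int d" for d :: int
    by simp_all
  have psiE: "psi E.CL u1 u2 1 = (\<Sum>q\<in>QE. PP (F1s (sgE q) u1) (F2s (sgE q) u2) * lenE q)"
    using E.psi_CL[OF u order_refl] by (simp add: E_Pc E.mu_1 cong: sum.cong)
  have psiF: "psi F.CL u1 u2 1 = (\<Sum>q\<in>QF. PP (F1s (sgF q) u1) (F2s (sgF q) u2) * lenF q)"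
    using F.psi_CL[OF u order_refl] by (simp add: F_Pc F.mu_1 cong: sum.cong)
  define a where "a c = PP (clamp01 (real_of_int (d1 c) + 1/2)) (clamp01 (real_of_int (d2 c) + 1/2))" for c
  define l where "l c = PP (clamp01 (2 * real_of_int (d1 c) + 1)) (clamp01 (2 * real_of_int (d2 c) + 1))" for c
  define r where "r c = PP (clamp01 (2 * real_of_int (d1 c))) (clamp01 (2 * real_of_int (d2 c)))" for c
  have Ecell: "PP (F1s (sgE (c,True)) u1) (F2s (sgE (c,True)) u2) * lenE (c,True)
      + PP (F1s (sgE (c,False)) u1) (F2s (sgE (c,False)) u2) * lenE (c,False) = mm c * a c" for c
    by (simp only: sgE_def F1_dseg F2_dseg sh1 sh2 fst_conv snd_conv) (simp add: lenE_def a_def field_simps)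
  have Fcell: "PP (F1s (sgF (c,None)) u1) (F2s (sgF (c,None)) u2) * lenF (c,None)
      + (\<Sum>l'<M. PP (F1s (sgF (c,Some(l',True))) u1) (F2s (sgF (c,Some(l',True))) u2) * lenF (c,Some(l',True))
               + PP (F1s (sgF (c,Some(l',False))) u1) (F2s (sgF (c,Some(l',False))) u2) * lenF (c,Some(l',False)))
      = mm c / 2 * a c + mm c / 4 * (l c + r c)" for c
  proof -
    have S: "(\<Sum>l'<M. PP (F1s (sgF (c,Some(l',True))) u1) (F2s (sgF (c,Some(l',True))) u2) * lenF (c,Some(l',True))
               + PP (F1s (sgF (c,Some(l',False))) u1) (F2s (sgF (c,Some(l',False))) u2) * lenF (c,Some(l',False)))
          = real M * (ell c * (l c + r c))"
      by (simp only: sgF_def option.case snd_conv fst_conv if_True if_False F1_ll F2_ll F1_ur F2_ur sh1 sh2 two)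
         (simp add: lenF_def l_def r_def algebra_simps)
    have P: "PP (F1s (sgF (c,None)) u1) (F2s (sgF (c,None)) u2) = a c"
      by (simp only: sgF_def option.case snd_conv fst_conv F1_dseg F2_dseg sh1 sh2 a_def)
    have lf: "lenF (c,None) = mm c / 2" by (simp add: lenF_def)
    have Me: "real M * ell c = mm c / 4" using ell4[of c] by simp
    have X: "real M * (ell c * (l c + r c)) = mm c / 4 * (l c + r c)" using Me by (simp add: mult.assoc[symmetric])
    show ?thesis unfolding S P lf X by (simp add: algebra_simps)
  qed
  have dcell: "mm c / 2 * a c + mm c / 4 * (l c + r c) - mm c * a c = mm c * (if ci c = i0 \<and> cj c = j0 then 1/8 else 0)" for c
  proof -
    have "l c / 4 + r c / 4 - a c / 2 = (if d1 c = 0 \<and> d2 c = 0 then 1/8 else 0)"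
      unfolding l_def r_def a_def by (rule delta)
    moreover have "(d1 c = 0 \<and> d2 c = 0) = (ci c = i0 \<and> cj c = j0)" by (auto simp: d1_def d2_def)
    ultimately have E: "l c / 4 + r c / 4 - a c / 2 = (if ci c = i0 \<and> cj c = j0 then 1/8 else 0)" by simp
    have "mm c / 2 * a c + mm c / 4 * (l c + r c) - mm c * a c = mm c * (l c / 4 + r c / 4 - a c / 2)"
      by (simp add: algebra_simps)
    then show ?thesis unfolding E .
  qed
  have "psi F.CL u1 u2 1 - psi E.CL u1 u2 1 = (\<Sum>c\<in>Cn. mm c / 2 * a c + mm c / 4 * (l c + r c)) - (\<Sum>c\<in>Cn. mm c * a c)"
    unfolding psiE psiF sum_QE sum_QF Ecell Fcell ..
  also have "\<dots> = (\<Sum>c\<in>Cn. mm c * (if ci c = i0 \<and> cj c = j0 then 1/8 else 0))"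
    unfolding sum_subtractf[symmetric] dcell ..
  also have "\<dots> = (\<Sum>c\<in>Cn. if ci c = i0 \<and> cj c = j0 then mm c / 8 else 0)"
    by (intro sum.cong) auto
  also have "\<dots> = (\<Sum>c\<in>{c\<in>Cn. ci c = i0 \<and> cj c = j0}. mm c / 8)"
    by (rule sum.inter_filter[symmetric, OF finCn])
  also have "{c\<in>Cn. ci c = i0 \<and> cj c = j0} = {i0} \<times> {j0} \<times> {..<n}"
    using i0 j0 by (auto simp: Cn_iff mem_Times_iff)
  also have "{i0} \<times> {j0} \<times> {..<n} = (\<lambda>k. (i0,j0,k)) ` {..<n}" by auto
  also have "(\<Sum>c\<in>(\<lambda>k. (i0,j0,k)) ` {..<n}. mm c / 8) = (\<Sum>k<n. mm (i0,j0,k) / 8)"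
    by (rule sum.reindex_cong[OF _ refl refl]) (auto simp: inj_on_def)
  also have "\<dots> = (\<Sum>k<n. m i0 j0 k) / 8"
    by (simp add: mm_def sum_divide_distrib)
  finally show ?thesis unfolding u1_def u2_def .
qed

end


context gridM begin

lemma EF_close:
  assumes v: "v \<in> {0..1}"
  shows "\<bar>E.CL u1 u2 v - F.CL u1 u2 v\<bar> \<le> 1 / (8 * real M)"
proof -
  have v1: "v \<le> 1" using v by simp
  define ET where "ET c = Rs (sgE (c,True)) u1 u2 * E.mu (c,True) v + Rs (sgE (c,False)) u1 u2 * E.mu (c,False) v" for c
  define FT where "FT c = Rs (sgF (c,None)) u1 u2 * F.mu (c,None) v
     + (\<Sum>l<M. Rs (sgF (c,Some(l,True))) u1 u2 * F.mu (c,Some(l,True)) v + Rs (sgF (c,Some(l,False))) u1 u2 * F.mu (c,Some(l,False)) v)" for c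
  have Esum: "E.CL u1 u2 v = (\<Sum>c\<in>Cn. ET c)"
    unfolding E.CL_formula[OF v1] sum_QE ET_def ..
  have Fsum: "F.CL u1 u2 v = (\<Sum>c\<in>Cn. FT c)"
    unfolding F.CL_formula[OF v1] sum_QF FT_def ..
  have cellb: "\<bar>ET c - FT c\<bar> \<le> ell c / 2" if c: "c \<in> Cn" for c
  proof -
    have cn: "ci c < n" "cj c < n" using c by (auto simp: Cn_iff)
    define x where "x = v - cst c"
    define g where "g r = max 0 (min (ell c) (x - real r * ell c))" for r :: nat
    have el: "0 \<le> ell c" using ell_nn[OF c] .
    have qT: "(c,True) \<in> QE" "(c,False) \<in> QE" using c by (auto simp: QE_def)
    have qN: "(c,None) \<in> QF" using c by (auto simp: QF_def OptS_def)
    have qS: "(c,Some(l,b)) \<in> QF" if "l < M" for l b using c that by (auto simp: QF_def OptS_def)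
    have muT: "E.mu (c,True) v = (\<Sum>l<M. g (2*l) + g (2*l+1))"
    proof -
      have "E.mu (c,True) v = max 0 (min (real (2*M) * ell c) x)"
        using E.mu_formula[OF qT(1)] ell_sum[of c] by (simp add: lenE_def stE_def offE_def x_def)
      also have "\<dots> = (\<Sum>r<2*M. g r)" unfolding g_def by (rule seg_sum[OF el, symmetric])
      also have "\<dots> = (\<Sum>l<M. g (2*l) + g (2*l+1))" by (rule sum_even_odd)
      finally show ?thesis .
    qed
    have muF: "E.mu (c,False) v = F.mu (c,None) v"
      using E.mu_formula[OF qT(2)] F.mu_formula[OF qN] by (simp add: lenE_def stE_def offE_def lenF_def stF_def offF_def)
    have muS1: "F.mu (c,Some(l,True)) v = g (2*l)" if "l < M" for l
      using F.mu_formula[OF qS[OF that]] by (simp add: lenF_def stF_def offF_def idx_def g_def x_def algebra_simps)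
    have muS2: "F.mu (c,Some(l,False)) v = g (2*l+1)" if "l < M" for l
      using F.mu_formula[OF qS[OF that]] by (simp add: lenF_def stF_def offF_def idx_def g_def x_def algebra_simps)
    define Rd where "Rd = Rs (dseg (ci c) (cj c) True) u1 u2"
    define Rll where "Rll = Rs (llseg (ci c) (cj c)) u1 u2"
    define Rur where "Rur = Rs (urseg (ci c) (cj c)) u1 u2"
    have split: "2 * Rd = Rll + Rur"
    proof -
      have st: "styp (dseg (ci c) (cj c) True)" "styp (llseg (ci c) (cj c))" "styp (urseg (ci c) (cj c))"
        by (simp_all add: dseg_def llseg_def urseg_def)
      show ?thesis unfolding Rd_def Rll_def Rur_def Rs_def
        by (simp only: st cop_def if_True F1_dseg F2_dseg F1_ll F2_ll F1_ur F2_ur) (rule diag_split)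
    qed
    have Rr: "0 \<le> Rll" "Rll \<le> 1" "0 \<le> Rur" "Rur \<le> 1"
      unfolding Rll_def Rur_def using Rs_range[OF valid_llseg[OF cn]] Rs_range[OF valid_urseg[OF cn]] by auto
    have sumS: "(\<Sum>l<M. Rs (sgF (c,Some(l,True))) u1 u2 * F.mu (c,Some(l,True)) v + Rs (sgF (c,Some(l,False))) u1 u2 * F.mu (c,Some(l,False)) v)
       = (\<Sum>l<M. Rll * g (2*l) + Rur * g (2*l+1))"
    proof (rule sum.cong[OF refl])
      fix l assume "l \<in> {..<M}"
      then have l: "l < M" by simp
      show "Rs (sgF (c,Some(l,True))) u1 u2 * F.mu (c,Some(l,True)) v + Rs (sgF (c,Some(l,False))) u1 u2 * F.mu (c,Some(l,False)) v
         = Rll * g (2*l) + Rur * g (2*l+1)"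
        by (simp add: sgF_def muS1[OF l] muS2[OF l] Rll_def Rur_def)
    qed
    have "ET c - FT c = Rd * (\<Sum>l<M. g (2*l) + g (2*l+1)) - (\<Sum>l<M. Rll * g (2*l) + Rur * g (2*l+1))"
      unfolding ET_def FT_def muT muF sumS
      by (simp add: sgE_def sgF_def Rd_def)
    also have "\<dots> = (\<Sum>l<M. (Rur - Rll) / 2 * (g (2*l) - g (2*l+1)))"
    proof -
      have R: "Rd = (Rll + Rur) / 2" using split by simp
      have T: "Rd * (g (2*l) + g (2*l+1)) - (Rll * g (2*l) + Rur * g (2*l+1)) = (Rur - Rll) / 2 * (g (2*l) - g (2*l+1))" for l
        unfolding R by (simp add: field_simps)
      have "Rd * (\<Sum>l<M. g (2*l) + g (2*l+1)) - (\<Sum>l<M. Rll * g (2*l) + Rur * g (2*l+1))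
          = (\<Sum>l<M. Rd * (g (2*l) + g (2*l+1)) - (Rll * g (2*l) + Rur * g (2*l+1)))"
        by (simp only: sum_distrib_left sum_subtractf)
      also have "\<dots> = (\<Sum>l<M. (Rur - Rll) / 2 * (g (2*l) - g (2*l+1)))" by (simp only: T)
      finally show ?thesis .
    qed
    also have "\<dots> = (Rur - Rll) / 2 * (\<Sum>l<M. g (2*l) - g (2*l+1))" by (simp add: sum_distrib_left)
    finally have eq: "ET c - FT c = (Rur - Rll) / 2 * (\<Sum>l<M. g (2*l) - g (2*l+1))" .
    have anti: "g r' \<le> g r" if "r \<le> r'" for r r'
    proof -
      have "real r * ell c \<le> real r' * ell c" using that el by (intro mult_right_mono) auto
      then show ?thesis unfolding g_def by (simp add: max_def min_def)
    qed
    have A0: "0 \<le> (\<Sum>l<M. g (2*l) - g (2*l+1))" by (rule alt_nonneg) (use anti in auto)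
    have A1: "(\<Sum>l<M. g (2*l) - g (2*l+1)) \<le> ell c"
    proof -
      have "(\<Sum>l<M. g (2*l) - g (2*l+1)) \<le> g 0 - g (2*M)" by (rule alt_sum) (use anti in auto)
      also have "\<dots> \<le> ell c" unfolding g_def using el by (simp add: max_def min_def)
      finally show ?thesis .
    qed
    have "\<bar>ET c - FT c\<bar> = \<bar>Rur - Rll\<bar> / 2 * (\<Sum>l<M. g (2*l) - g (2*l+1))"
      unfolding eq using A0 by (simp add: abs_mult)
    also have "\<dots> \<le> 1 / 2 * ell c"
      using Rr A0 A1 by (intro mult_mono) auto
    finally show ?thesis by simp
  qed
  have "\<bar>E.CL u1 u2 v - F.CL u1 u2 v\<bar> = \<bar>\<Sum>c\<in>Cn. ET c - FT c\<bar>"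
    unfolding Esum Fsum sum_subtractf ..
  also have "\<dots> \<le> (\<Sum>c\<in>Cn. \<bar>ET c - FT c\<bar>)" by (rule sum_abs)
  also have "\<dots> \<le> (\<Sum>c\<in>Cn. ell c / 2)" by (intro sum_mono cellb)
  also have "\<dots> = (\<Sum>c\<in>Cn. mm c) / (8 * real M)"
    by (simp add: ell_def sum_divide_distrib)
  finally show ?thesis by (simp add: sum_mm)
qed

end


definition Egrid :: "nat \<Rightarrow> (nat \<Rightarrow> nat \<Rightarrow> nat \<Rightarrow> real) \<Rightarrow> real \<Rightarrow> real \<Rightarrow> real \<Rightarrow> real" where
  "Egrid n m = layout.CL (gridm.QE n) (gridm.stE n m) (gridm.lenE m) (gridm.sgE n)"

lemma (in gridm) Egrid_eq: "Egrid n m = E.CL" by (simp add: Egrid_def)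

lemma gridm_gmass:
  assumes C: "copula3 C" and n: "1 \<le> n"
  shows "gridm n (gmass C n)"
  by unfold_locales (use gmass_nn[OF C n] gmass_row[OF C n] gmass_col[OF C n] gmass_slab[OF C n] n in auto)

lemma floor_ceil_facts:
  fixes x :: real assumes x: "x \<in> unitI" and n: "1 \<le> n"
  shows "nat \<lfloor>real n * x\<rfloor> \<le> n" "nat \<lceil>real n * x\<rceil> \<le> n"
    "real (nat \<lfloor>real n * x\<rfloor>) / real n \<le> x" "x \<le> real (nat \<lceil>real n * x\<rceil>) / real n"
    "real (nat \<lceil>real n * x\<rceil>) / real n - x \<le> 1 / real n"
    "x - real (nat \<lfloor>real n * x\<rfloor>) / real n \<le> 1 / real n"
proof -
  have x01: "0 \<le> x" "x \<le> 1" using x by (auto simp: unitI_def)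
  have rn: "0 < real n" using n by simp
  have nx: "0 \<le> real n * x" "real n * x \<le> real n" using x01 rn by (auto intro: mult_left_le)
  have fl: "real (nat \<lfloor>real n * x\<rfloor>) = of_int \<lfloor>real n * x\<rfloor>" using nx by simp
  have cl: "real (nat \<lceil>real n * x\<rceil>) = of_int \<lceil>real n * x\<rceil>" using nx by simp
  show "nat \<lfloor>real n * x\<rfloor> \<le> n" using nx by linarith
  show "nat \<lceil>real n * x\<rceil> \<le> n" using nx by (simp add: nat_le_iff ceiling_le_iff)
  show "real (nat \<lfloor>real n * x\<rfloor>) / real n \<le> x" unfolding fl using rn by (simp add: divide_simps mult.commute)
  show "x \<le> real (nat \<lceil>real n * x\<rceil>) / real n" unfolding cl using rn by (simp add: divide_simps mult.commute)
  have c1: "real_of_int \<lceil>real n * x\<rceil> - real n * x \<le> 1" using ceiling_correct[of "real n * x"] by linarith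
  have "(real_of_int \<lceil>real n * x\<rceil> - real n * x) / real n \<le> 1 / real n"
    using c1 rn by (intro divide_right_mono) auto
  then show "real (nat \<lceil>real n * x\<rceil>) / real n - x \<le> 1 / real n"
    unfolding cl using rn by (simp add: diff_divide_distrib)
  have f1: "real n * x - real_of_int \<lfloor>real n * x\<rfloor> \<le> 1" using floor_correct[of "real n * x"] by linarith
  have "(real n * x - real_of_int \<lfloor>real n * x\<rfloor>) / real n \<le> 1 / real n"
    using f1 rn by (intro divide_right_mono) auto
  then show "x - real (nat \<lfloor>real n * x\<rfloor>) / real n \<le> 1 / real n"
    unfolding fl using rn by (simp add: diff_divide_distrib)
qed

lemma density_step:
  assumes C: "copula3 C" and n: "1 \<le> n"
  shows "dinf C (Egrid n (gmass C n)) \<le> 3 / real n"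
proof -
  interpret gridm n "gmass C n" by (rule gridm_gmass[OF C n])
  have E3: "copula3 E.CL" by (rule E_copula3)
  have grid: "E.CL (real a / real n) (real b / real n) (real c / real n) = C (real a / real n) (real b / real n) (real c / real n)"
    if "a \<le> n" "b \<le> n" "c \<le> n" for a b c
    using E_grid[OF that] gridG_sum[OF C n that] by (simp add: gridG_def)
  have gin: "real a / real n \<in> unitI" if "a \<le> n" for a using grid_in[OF C n that] .
  show ?thesis unfolding Egrid_eq
  proof (rule dinf_le)
    fix x y z assume xyz: "x \<in> unitI" "y \<in> unitI" "z \<in> unitI"
    define lx where "lx = nat \<lfloor>real n * x\<rfloor>"
    define ly where "ly = nat \<lfloor>real n * y\<rfloor>"
    define lz where "lz = nat \<lfloor>real n * z\<rfloor>"
    define hx where "hx = nat \<lceil>real n * x\<rceil>"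
    define hy where "hy = nat \<lceil>real n * y\<rceil>"
    define hz where "hz = nat \<lceil>real n * z\<rceil>"
    note fx = floor_ceil_facts[OF xyz(1) n, folded lx_def hx_def]
    note fy = floor_ceil_facts[OF xyz(2) n, folded ly_def hy_def]
    note fz = floor_ceil_facts[OF xyz(3) n, folded lz_def hz_def]
    have a1: "E.CL x y z \<le> E.CL (real hx / real n) (real hy / real n) (real hz / real n)"
      using fx fy fz xyz gin by (intro cop3_mono(1)[OF E3]) auto
    have a2: "C (real hx / real n) (real hy / real n) (real hz / real n) - C x y z \<le> 3 / real n"
    proof -
      have "C (real hx / real n) (real hy / real n) (real hz / real n) - C x y z
           \<le> (real hx / real n - x) + (real hy / real n - y) + (real hz / real n - z)"
        using fx fy fz xyz gin by (intro cop3_mono(2)[OF C]) auto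
      then show ?thesis using fx fy fz by simp
    qed
    have b1: "E.CL (real lx / real n) (real ly / real n) (real lz / real n) \<le> E.CL x y z"
      using fx fy fz xyz gin by (intro cop3_mono(1)[OF E3]) auto
    have b2: "C x y z - C (real lx / real n) (real ly / real n) (real lz / real n) \<le> 3 / real n"
    proof -
      have "C x y z - C (real lx / real n) (real ly / real n) (real lz / real n)
           \<le> (x - real lx / real n) + (y - real ly / real n) + (z - real lz / real n)"
        using fx fy fz xyz gin by (intro cop3_mono(2)[OF C]) auto
      then show ?thesis using fx fy fz by simp
    qed
    show "\<bar>C x y z - E.CL x y z\<bar> \<le> 3 / real n"
      using a1 a2 b1 b2 grid[of hx hy hz] grid[of lx ly lz] fx fy fz by (simp add: abs_le_iff)
  qed
qed


lemma discont:
  assumes g: "gridm n m"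
  shows "\<not> (\<forall>e>0. \<exists>d>0. \<forall>C'\<in>Cc. dinf (Egrid n m) C' < d \<longrightarrow> dinf (psi (Egrid n m)) (psi C') < e)"
proof -
  interpret gridm n m by (rule g)
  have tot: "(\<Sum>i<n. \<Sum>j<n. \<Sum>k<n. m i j k) = 1"
  proof -
    have "(\<Sum>i<n. \<Sum>j<n. \<Sum>k<n. m i j k) = (\<Sum>i<n. 1 / real n)" using mrow by simp
    also have "\<dots> = 1" using n0 by simp
    finally show ?thesis .
  qed
  obtain i0 j0 where ij: "i0 < n" "j0 < n" "0 < (\<Sum>k<n. m i0 j0 k)"
  proof (rule ccontr)
    assume "\<not> thesis"
    then have "\<forall>i<n. \<forall>j<n. (\<Sum>k<n. m i j k) \<le> 0" using that by (meson not_le)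
    then have A: "\<And>i j. i \<in> {..<n} \<Longrightarrow> j \<in> {..<n} \<Longrightarrow> (\<Sum>k<n. m i j k) \<le> 0" by auto
    have "(\<Sum>i<n. \<Sum>j<n. \<Sum>k<n. m i j k) \<le> 0"
    proof (rule sum_nonpos)
      fix i assume i: "i \<in> {..<n}"
      show "(\<Sum>j<n. \<Sum>k<n. m i j k) \<le> 0" by (rule sum_nonpos) (rule A[OF i])
    qed
    then show False using tot by simp
  qed
  define e where "e = (\<Sum>k<n. m i0 j0 k) / 8"
  have e0: "0 < e" using ij by (simp add: e_def)
  show ?thesis
  proof
    assume H: "\<forall>e>0. \<exists>d>0. \<forall>C'\<in>Cc. dinf (Egrid n m) C' < d \<longrightarrow> dinf (psi (Egrid n m)) (psi C') < e"
    obtain d where d: "0 < d" and Hd: "\<forall>C'\<in>Cc. dinf (Egrid n m) C' < d \<longrightarrow> dinf (psi (Egrid n m)) (psi C') < e"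
      using H e0 by blast
    define M where "M = nat \<lceil>1 / d\<rceil> + 1"
    have M1: "1 \<le> M" by (simp add: M_def)
    have Md: "1 / (8 * real M) < d"
    proof -
      have "1 / d \<le> real (nat \<lceil>1 / d\<rceil>)" by linarith
      then have "1 / d < real M" by (simp add: M_def)
      then have "1 < d * real M" using d by (simp add: field_simps)
      then have "1 < d * (8 * real M)" by linarith
      then show ?thesis using M1 by (simp add: field_simps)
    qed
    interpret gridM n m M by unfold_locales (rule M1)
    have FC: "F.CL \<in> Cc" by (rule F_Cc)
    have "dinf E.CL F.CL \<le> 1 / (8 * real M)"
      by (rule dinf_le) (rule EF_close, simp add: unitI_def)
    then have "dinf (Egrid n m) F.CL < d" using Md by (simp add: Egrid_eq)
    then have lt: "dinf (psi E.CL) (psi F.CL) < e" using Hd FC by (simp add: Egrid_eq)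
    define u1 where "u1 = (2 * real i0 + 1) / (2 * real n)"
    define u2 where "u2 = (2 * real j0 + 1) / (2 * real n)"
    have u: "u1 \<in> unitI" "u2 \<in> unitI" "1 \<in> unitI"
      using u_in[OF ij(1)] u_in[OF ij(2)] by (auto simp: u1_def u2_def unitI_def)
    have bd: "\<bar>psi E.CL x y z - psi F.CL x y z\<bar> \<le> 2" if "x \<in> unitI" "y \<in> unitI" "z \<in> unitI" for x y z
    proof -
      have "\<bar>psi E.CL x y z\<bar> \<le> 1" "\<bar>psi F.CL x y z\<bar> \<le> 1"
        using E.psi_bound F.psi_bound that by (auto simp: unitI_def)
      then show ?thesis by linarith
    qed
    have "\<bar>psi E.CL u1 u2 1 - psi F.CL u1 u2 1\<bar> \<le> dinf (psi E.CL) (psi F.CL)"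
      by (rule dinf_ge[OF bd u])
    moreover have "\<bar>psi E.CL u1 u2 1 - psi F.CL u1 u2 1\<bar> = e"
    proof -
      have gap: "psi F.CL u1 u2 1 - psi E.CL u1 u2 1 = e"
        unfolding u1_def u2_def e_def by (rule psi_gap[OF ij(1) ij(2)])
      have "\<bar>psi E.CL u1 u2 1 - psi F.CL u1 u2 1\<bar> = \<bar>psi F.CL u1 u2 1 - psi E.CL u1 u2 1\<bar>"
        by (rule abs_minus_commute)
      also have "\<dots> = e" unfolding gap using e0 by simp
      finally show ?thesis .
    qed
    ultimately show False using lt by simp
  qed
qed

theorem corollary6p2:
  shows "\<exists>D \<subseteq> Cc.
           (\<forall>C\<in>Cc. \<forall>e>0. \<exists>E\<in>D. dinf C E < e) \<and>
           (\<forall>C\<in>D. \<not> (\<forall>e>0. \<exists>d>0. \<forall>C'\<in>Cc. dinf C C' < d \<longrightarrow> dinf (psi C) (psi C') < e))"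
proof (intro exI conjI)
  define D where "D = {E. \<exists>n m. gridm n m \<and> E = Egrid n m}"
  show "D \<subseteq> Cc"
  proof
    fix E assume "E \<in> D"
    then obtain n m where g: "gridm n m" and E: "E = Egrid n m" by (auto simp: D_def)
    show "E \<in> Cc" using gridm.E_Cc[OF g] gridm.Egrid_eq[OF g] E by simp
  qed
  show "\<forall>C\<in>Cc. \<forall>e>0. \<exists>E\<in>D. dinf C E < e"
  proof (intro ballI allI impI)
    fix C :: "real \<Rightarrow> real \<Rightarrow> real \<Rightarrow> real" and e :: real
    assume C: "C \<in> Cc" and e: "0 < e"
    have C3: "copula3 C" using C by (simp add: Cc_def)
    define n where "n = nat \<lceil>3 / e\<rceil> + 1"
    have n1: "1 \<le> n" by (simp add: n_def)
    have ne: "3 / real n < e"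
    proof -
      have "3 / e \<le> real (nat \<lceil>3 / e\<rceil>)" by linarith
      then have "3 / e < real n" by (simp add: n_def)
      then have "3 < e * real n" using e by (simp add: field_simps)
      then show ?thesis using n1 by (simp add: field_simps)
    qed
    have "Egrid n (gmass C n) \<in> D" using gridm_gmass[OF C3 n1] by (auto simp: D_def)
    moreover have "dinf C (Egrid n (gmass C n)) < e" using density_step[OF C3 n1] ne by linarith
    ultimately show "\<exists>E\<in>D. dinf C E < e" by blast
  qed
  show "\<forall>C\<in>D. \<not> (\<forall>e>0. \<exists>d>0. \<forall>C'\<in>Cc. dinf C C' < d \<longrightarrow> dinf (psi C) (psi C') < e)"
  proof
    fix E assume "E \<in> D"
    then obtain n m where g: "gridm n m" and E: "E = Egrid n m" by (auto simp: D_def)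
    show "\<not> (\<forall>e>0. \<exists>d>0. \<forall>C'\<in>Cc. dinf E C' < d \<longrightarrow> dinf (psi E) (psi C') < e)"
      unfolding E by (rule discont[OF g])
  qed
qed


end
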